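(* For any history $\mathcal{F}_{t-1}$, conditioned on the event $E^f(t)$, the instantaneous regret $r_t=f(\mathbf{x}^* )-f(\mathbf{x}_t)$ satisfies \[ \mathbb{E}[r_t\mid\mathcal{F}_{t-1}]\le c_te^{C}\Big(1+\frac{10}{p}\Big)\mathbb{E}[\sigma_{t-1}(\mathbf{x}_t)\mid\mathcal{F}_{t-1}]+\frac{2B'}{t^2},\qquad p=\frac{1}{4e\sqrt\pi}. \]
   Context: $\mathcal{X}$ is a finite subset of the unit ball of $\mathbb{R}^d$; $f\sim\mathcal{GP}(0,k)$ with $k$ the NTK, $|f(\mathbf{x})|\le B'$ for all $\mathbf{x}$; observations $y=f(\mathbf{x})+\zeta$, $\zeta\sim\mathcal{N}(0,\sigma^2)$; $\mathbf{x}^*$ maximizes $f$. Queries are chosen in batches of size $B$ and indexed sequentially; $\mathrm{fb}[t]$ is the largest index whose observation is available when $\mathbf{x}_t$ is chosen ($t-\mathrm{fb}[t]\le B$). $\mu_{\mathrm{fb}[t]},\sigma_{\mathrm{fb}[t]}$: GP posterior mean/std given observations $1,\dots,\mathrm{fb}[t]$; $\sigma_{t-1}$: GP posterior std given inputs $1,\dots,t-1$. $\mathcal{F}_{t-1}$ is the history of collected inputs/outputs and pending inputs. $\beta_t=2\log(\pi^2t^2|\mathcal{X}|/(3\delta))$, $\delta\in(0,1)$, $c_t=\beta_t(1+\sqrt{2\log(|\mathcal{X}|t^2)})$. Given $\mathcal{F}_{t-1}$, $f_t\sim\mathcal{GP}(\mu_{\mathrm{fb}[t]},\beta_t^2\sigma^2_{\mathrm{fb}[t]})$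 and $\mathbf{x}_t=\arg\max_{\mathbf{x}}f_t(\mathbf{x})$. $E^f(t)$: $|\mu_{\mathrm{fb}[t]}(\mathbf{x})-f(\mathbf{x})|\le\beta_t\sigma_{\mathrm{fb}[t]}(\mathbf{x})$ for all $\mathbf{x}$. $C$ is a constant with $\max_{A\subset\mathcal{X},|A|\le B-1}\mathbb{I}(f;\mathbf{y}_A\mid\mathbf{y}_{1:\mathrm{fb}[t]})\le C$ for all $t\ge1$ ($\mathbf{y}_A$ noisy observations at $A$, $\mathbb{I}$ mutual information). *)

theory Defs
  imports "HOL-Probability.Probability" "Jordan_Normal_Form.Gauss_Jordan_Elimination"
          "Jordan_Normal_Form.Determinant"
begin

definition gram_mat :: "('a \<Rightarrow> 'a \<Rightarrow> real) \<Rightarrow> 'a list \<Rightarrow> real mat" where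
  "gram_mat k as = Matrix.mat (length as) (length as) (\<lambda>(i,j). k (as!i) (as!j))"

definition kern_vec :: "('a \<Rightarrow> 'a \<Rightarrow> real) \<Rightarrow> 'a list \<Rightarrow> 'a \<Rightarrow> real vec" where
  "kern_vec k xs x = Matrix.vec (length xs) (\<lambda>i. k (xs!i) x)"

definition reg_inv :: "('a \<Rightarrow> 'a \<Rightarrow> real) \<Rightarrow> real \<Rightarrow> 'a list \<Rightarrow> real mat" where
  "reg_inv k sn xs = the (mat_inverse (gram_mat k xs + (sn\<^sup>2) \<cdot>\<^sub>m 1\<^sub>m (length xs)))"

definition post_mean :: "('a \<Rightarrow> 'a \<Rightarrow> real) \<Rightarrow> real \<Rightarrow> 'a list \<Rightarrow> real list \<Rightarrow> 'a \<Rightarrow> real" where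
  "post_mean k sn xs ys x =
     scalar_prod (kern_vec k xs x) (reg_inv k sn xs *\<^sub>v Matrix.vec (length xs) (\<lambda>i. ys!i))"

definition post_cov :: "('a \<Rightarrow> 'a \<Rightarrow> real) \<Rightarrow> real \<Rightarrow> 'a list \<Rightarrow> 'a \<Rightarrow> 'a \<Rightarrow> real" where
  "post_cov k sn xs x x' = k x x' - scalar_prod (kern_vec k xs x) (reg_inv k sn xs *\<^sub>v kern_vec k xs x')"

definition post_sd :: "('a \<Rightarrow> 'a \<Rightarrow> real) \<Rightarrow> real \<Rightarrow> 'a list \<Rightarrow> 'a \<Rightarrow> real" where
  "post_sd k sn xs x = sqrt (post_cov k sn xs x x)"

text \<open>Mutual information I(f; y_A | y_{1:n}) between f and noisy observations at the
  (multi)set of inputs as, given the data at inputs xs (Gaussian closed form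
  1/2 log det(I + sn^{-2} K^{(n)}_A), K^{(n)} the posterior covariance).\<close>
definition info_gain :: "('a \<Rightarrow> 'a \<Rightarrow> real) \<Rightarrow> real \<Rightarrow> 'a list \<Rightarrow> 'a list \<Rightarrow> real" where
  "info_gain k sn xs as =
     1/2 * ln (det (1\<^sub>m (length as) + (1 / sn\<^sup>2) \<cdot>\<^sub>m gram_mat (post_cov k sn xs) as))"

definition psd_kernel :: "'a set \<Rightarrow> ('a \<Rightarrow> 'a \<Rightarrow> real) \<Rightarrow> bool" where
  "psd_kernel X k \<longleftrightarrow> (\<forall>x\<in>X. \<forall>x'\<in>X. k x x' = k x' x) \<and>
     (\<forall>c :: 'a \<Rightarrow> real. (\<Sum>x\<in>X. \<Sum>x'\<in>X. c x * c x' * k x x') \<ge> 0)"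

definition normal_rv :: "'w measure \<Rightarrow> ('w \<Rightarrow> real) \<Rightarrow> real \<Rightarrow> real \<Rightarrow> bool" where
  "normal_rv M Y m v \<longleftrightarrow> Y \<in> borel_measurable M \<and>
     (if v = 0 then (AE \<omega> in M. Y \<omega> = m) else distributed M lborel Y (normal_density m (sqrt v)))"

definition gaussian_field ::
  "'w measure \<Rightarrow> ('w \<Rightarrow> 'a \<Rightarrow> real) \<Rightarrow> 'a set \<Rightarrow> ('a \<Rightarrow> real) \<Rightarrow> ('a \<Rightarrow> 'a \<Rightarrow> real) \<Rightarrow> bool" where
  "gaussian_field M F X m K \<longleftrightarrow>
     (\<forall>c :: 'a \<Rightarrow> real. normal_rv M (\<lambda>\<omega>. \<Sum>x\<in>X. c x * F \<omega> x) (\<Sum>x\<in>X. c x * m x)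
        (\<Sum>x\<in>X. \<Sum>x'\<in>X. c x * c x' * K x x'))"

definition ts_beta :: "nat \<Rightarrow> real \<Rightarrow> nat \<Rightarrow> real" where
  "ts_beta nX \<delta> t = 2 * ln (pi\<^sup>2 * (real t)\<^sup>2 * real nX / (3 * \<delta>))"

definition ts_c :: "nat \<Rightarrow> real \<Rightarrow> nat \<Rightarrow> real" where
  "ts_c nX \<delta> t = ts_beta nX \<delta> t * (1 + sqrt (2 * ln (real nX * (real t)\<^sup>2)))"

definition ts_p :: real where
  "ts_p = 1 / (4 * exp 1 * sqrt pi)"

end

theory Submission
  imports Defs "HOL-Real_Asymp.Real_Asymp"
begin

definition Amat :: "('a \<Rightarrow> 'a \<Rightarrow> real) \<Rightarrow> real \<Rightarrow> 'a list \<Rightarrow> real mat" where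
  "Amat k sn ys = gram_mat k ys + (sn\<^sup>2) \<cdot>\<^sub>m 1\<^sub>m (length ys)"

lemma Amat_carrier[simp]: "Amat k sn ys \<in> carrier_mat (length ys) (length ys)"
  unfolding Amat_def gram_mat_def by auto

lemma Amat_dim[simp]: "dim_row (Amat k sn ys) = length ys" "dim_col (Amat k sn ys) = length ys"
  unfolding Amat_def gram_mat_def by auto

lemma Amat_index: "i < length ys \<Longrightarrow> j < length ys \<Longrightarrow>
   Amat k sn ys $$ (i,j) = k (ys!i) (ys!j) + (if i = j then sn\<^sup>2 else 0)"
  unfolding Amat_def gram_mat_def by auto

lemma sum_delta_aux: "i < (n::nat) \<Longrightarrow> (\<Sum>j<n. (a j + (if i = j then c else 0)) * (w j::real)) = (\<Sum>j<n. a j * w j) + c * w i"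
proof -
  assume i: "i < n"
  have "(\<Sum>j<n. (a j + (if i = j then c else 0)) * w j) = (\<Sum>j<n. a j * w j) + (\<Sum>j<n. (if i = j then c * w j else 0))"
    by (subst sum.distrib[symmetric], rule sum.cong, auto simp: distrib_right)
  also have "(\<Sum>j<n. (if i = j then c * w j else 0)) = c * w i" using i by (simp add: sum.delta sum.delta')
  finally show ?thesis .
qed

lemma group_sum:
  assumes "finite X" "set ys \<subseteq> X"
  shows "(\<Sum>i<length ys. (v i::real) * g (ys!i)) = (\<Sum>x\<in>X. (\<Sum>i\<in>{i. i<length ys \<and> ys!i = x}. v i) * g x)"
proof -
  have "(\<Sum>x\<in>X. (\<Sum>i\<in>{i. i<length ys \<and> ys!i = x}. v i) * g x)
      = (\<Sum>x\<in>X. (\<Sum>i\<in>{i\<in>{..<length ys}. ys!i = x}. v i * g (ys!i)))"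
  proof (rule sum.cong)
    fix x assume "x \<in> X"
    have "(\<Sum>i\<in>{i. i<length ys \<and> ys!i = x}. v i) * g x = (\<Sum>i\<in>{i. i<length ys \<and> ys!i = x}. v i * g x)"
      by (rule sum_distrib_right)
    also have "\<dots> = (\<Sum>i\<in>{i\<in>{..<length ys}. ys!i = x}. v i * g (ys!i))"
      by (rule sum.cong, auto)
    finally show "(\<Sum>i\<in>{i. i<length ys \<and> ys!i = x}. v i) * g x = (\<Sum>i\<in>{i\<in>{..<length ys}. ys!i = x}. v i * g (ys!i))" .
  qed simp
  also have "\<dots> = (\<Sum>i<length ys. v i * g (ys!i))"
    by (rule sum.group, insert assms, auto)
  finally show ?thesis by simp
qed

lemma psd_list:
  assumes "finite X" "set ys \<subseteq> X" "psd_kernel X K"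
  shows "(\<Sum>i<length ys. \<Sum>j<length ys. v i * v j * K (ys!i) (ys!j)) \<ge> 0"
proof -
  define c where "c x = (\<Sum>i\<in>{i. i<length ys \<and> ys!i = x}. v i)" for x
  have "(\<Sum>i<length ys. \<Sum>j<length ys. v i * v j * K (ys!i) (ys!j))
       = (\<Sum>i<length ys. v i * (\<Sum>j<length ys. v j * K (ys!i) (ys!j)))"
    by (simp add: sum_distrib_left mult.assoc)
  also have "\<dots> = (\<Sum>i<length ys. v i * (\<Sum>y\<in>X. c y * K (ys!i) y))"
    using group_sum[OF assms(1,2), of v "\<lambda>y. K _ y"] unfolding c_def by simp
  also have "\<dots> = (\<Sum>x\<in>X. c x * (\<Sum>y\<in>X. c y * K x y))"
    using group_sum[OF assms(1,2), of v "\<lambda>x. (\<Sum>y\<in>X. c y * K x y)"] unfolding c_def by simp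
  also have "\<dots> = (\<Sum>x\<in>X. \<Sum>y\<in>X. c x * c y * K x y)"
    by (simp add: sum_distrib_left mult.assoc)
  finally show ?thesis using assms(3) unfolding psd_kernel_def by simp
qed

lemma Amat_det:
  assumes "finite X" "set ys \<subseteq> X" "psd_kernel X k" "sn > 0"
  shows "det (Amat k sn ys) \<noteq> 0"
proof
  let ?n = "length ys"
  assume "det (Amat k sn ys) = 0"
  then obtain v where v: "v \<in> carrier_vec ?n" "v \<noteq> 0\<^sub>v ?n" "Amat k sn ys *\<^sub>v v = 0\<^sub>v ?n"
    using det_0_iff_vec_prod_zero_field[OF Amat_carrier] by blast
  have "v \<bullet> (Amat k sn ys *\<^sub>v v) = 0" using v by simp
  moreover have "v \<bullet> (Amat k sn ys *\<^sub>v v) = (\<Sum>i<?n. \<Sum>j<?n. v$i * v$j * k (ys!i) (ys!j)) + sn\<^sup>2 * (\<Sum>i<?n. v$i * v$i)"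
  proof -
    have "v \<bullet> (Amat k sn ys *\<^sub>v v) = (\<Sum>i<?n. v$i * (\<Sum>j<?n. (k (ys!i) (ys!j) + (if i = j then sn\<^sup>2 else 0)) * v$j))"
      unfolding scalar_prod_def using v(1)
      by (auto simp: Amat_index atLeast0LessThan scalar_prod_def row_def intro!: sum.cong)
    also have "\<dots> = (\<Sum>i<?n. v$i * ((\<Sum>j<?n. k (ys!i) (ys!j) * v$j) + sn\<^sup>2 * v$i))"
      by (rule sum.cong, simp, subst sum_delta_aux, auto)
    also have "\<dots> = (\<Sum>i<?n. \<Sum>j<?n. v$i * v$j * k (ys!i) (ys!j)) + sn\<^sup>2 * (\<Sum>i<?n. v$i * v$i)"
      by (simp add: distrib_left sum.distrib sum_distrib_left sum_distrib_right mult_ac)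
    finally show ?thesis .
  qed
  moreover have "(\<Sum>i<?n. \<Sum>j<?n. v$i * v$j * k (ys!i) (ys!j)) \<ge> 0"
    using psd_list[OF assms(1-3), of "\<lambda>i. v$i"] by simp
  ultimately have h: "sn\<^sup>2 * (\<Sum>i<?n. v$i * v$i) \<le> 0" by linarith
  have "(\<Sum>i<?n. v$i * v$i) \<le> 0"
    using h mult_le_cancel_left_pos[of "sn^2" "(\<Sum>i<?n. v$i * v$i)" 0] assms(4) by simp
  moreover have "\<forall>i\<in>{..<?n}. v$i * v$i \<ge> 0" by simp
  ultimately have "\<forall>i\<in>{..<?n}. v$i * v$i = 0"
    using sum_nonneg_eq_0_iff[of "{..<?n}" "\<lambda>i. v$i * v$i"] by (simp add: order_antisym sum_nonneg)
  hence "v = 0\<^sub>v ?n" using v(1) by (intro eq_vecI, auto)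
  with v(2) show False by simp
qed

lemma reg_inv_props:
  assumes "finite X" "set ys \<subseteq> X" "psd_kernel X k" "sn > 0"
  shows "reg_inv k sn ys \<in> carrier_mat (length ys) (length ys)"
    "reg_inv k sn ys * Amat k sn ys = 1\<^sub>m (length ys)"
    "Amat k sn ys * reg_inv k sn ys = 1\<^sub>m (length ys)"
proof -
  have U: "Amat k sn ys \<in> Units (ring_mat TYPE(real) (length ys) ())"
    by (rule det_non_zero_imp_unit[OF Amat_carrier Amat_det[OF assms]])
  have "mat_inverse (Amat k sn ys) \<noteq> None"
    using mat_inverse(1)[OF Amat_carrier, of k sn ys "()"] U by blast
  then obtain R where R: "mat_inverse (Amat k sn ys) = Some R" by auto
  have RI: "reg_inv k sn ys = R" using R unfolding reg_inv_def Amat_def[symmetric] by simp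
  from mat_inverse(2)[OF Amat_carrier R] show "reg_inv k sn ys \<in> carrier_mat (length ys) (length ys)"
    "reg_inv k sn ys * Amat k sn ys = 1\<^sub>m (length ys)"
    "Amat k sn ys * reg_inv k sn ys = 1\<^sub>m (length ys)" unfolding RI by auto
qed

lemma mat_vec_sum: "M \<in> carrier_mat m n \<Longrightarrow> v \<in> carrier_vec n \<Longrightarrow> i < m \<Longrightarrow>
  (M *\<^sub>v v) $ i = (\<Sum>j<n. M $$ (i,j) * v $ j)"
  by (auto simp: scalar_prod_def row_def atLeast0LessThan intro!: sum.cong)

lemma sprod_sum: "dim_vec w = n \<Longrightarrow> u \<bullet> w = (\<Sum>i<n. u $ i * w $ i)"
  by (auto simp: scalar_prod_def atLeast0LessThan)

lemma kern_vec_dim[simp]: "kern_vec k xs x \<in> carrier_vec (length xs)" "dim_vec (kern_vec k xs x) = length xs"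
  unfolding kern_vec_def by auto

lemma kern_vec_index[simp]: "i < length xs \<Longrightarrow> kern_vec k xs x $ i = k (xs!i) x"
  unfolding kern_vec_def by auto

lemma post_cov_sum:
  assumes "reg_inv k sn ys \<in> carrier_mat (length ys) (length ys)"
  shows "post_cov k sn ys x y = k x y - (\<Sum>i<length ys. k (ys!i) x * (reg_inv k sn ys *\<^sub>v kern_vec k ys y) $ i)"
  unfolding post_cov_def using assms by (subst sprod_sum[of _ "length ys"]) auto

lemma post_cov_update:
  assumes X: "finite X" "set ys \<subseteq> X" "psd_kernel X k" "sn > 0" and a: "a \<in> X" and x: "x \<in> X"
    and s: "post_cov k sn ys a a + sn\<^sup>2 \<noteq> 0"
  shows "post_cov k sn (ys @ [a]) x y = post_cov k sn ys x y
     - post_cov k sn ys x a * post_cov k sn ys a y / (post_cov k sn ys a a + sn\<^sup>2)"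
proof -
  define n where "n = length ys"
  define R where "R = reg_inv k sn ys"
  define A where "A = Amat k sn ys"
  define P where "P = post_cov k sn ys"
  define s where "s = P a a + sn\<^sup>2"
  define \<zeta> where "\<zeta> = P a y / s"
  define z0 where "z0 = R *\<^sub>v kern_vec k ys y"
  define zb where "zb = R *\<^sub>v kern_vec k ys a"
  define z where "z = Matrix.vec n (\<lambda>i. z0 $ i - \<zeta> * zb $ i)"
  define ze where "ze = Matrix.vec (Suc n) (\<lambda>i. if i < n then z $ i else \<zeta>)"
  have R: "R \<in> carrier_mat n n" "R * A = 1\<^sub>m n" "A * R = 1\<^sub>m n"
    using reg_inv_props[OF X] unfolding R_def A_def n_def by auto
  have A: "A \<in> carrier_mat n n" unfolding A_def n_def by simp
  have symk: "\<And>u v. u \<in> X \<Longrightarrow> v \<in> X \<Longrightarrow> k u v = k v u"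
    using X(3) unfolding psd_kernel_def by auto
  have ysX: "\<And>i. i < n \<Longrightarrow> ys!i \<in> X" using X(2) unfolding n_def by auto
  have z0c: "z0 \<in> carrier_vec n" and zbc: "zb \<in> carrier_vec n"
    unfolding z0_def zb_def using R by (auto simp: n_def)
  have Az0: "A *\<^sub>v z0 = kern_vec k ys y"
    unfolding z0_def using R A by (subst assoc_mult_mat_vec[symmetric], auto simp: n_def)
  have Azb: "A *\<^sub>v zb = kern_vec k ys a"
    unfolding zb_def using R A by (subst assoc_mult_mat_vec[symmetric], auto simp: n_def)
  have Pxy: "\<And>u v. P u v = k u v - (\<Sum>i<n. k (ys!i) u * (R *\<^sub>v kern_vec k ys v) $ i)"
    using post_cov_sum[OF reg_inv_props(1)[OF X]] unfolding P_def R_def n_def by simp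
  have Az: "\<And>i. i < n \<Longrightarrow> (\<Sum>j<n. A $$ (i,j) * z $ j) = k (ys!i) y - \<zeta> * k (ys!i) a"
  proof -
    fix i assume i: "i < n"
    have "(\<Sum>j<n. A $$ (i,j) * z $ j) = (\<Sum>j<n. A $$ (i,j) * z0 $ j) - \<zeta> * (\<Sum>j<n. A $$ (i,j) * zb $ j)"
      unfolding z_def by (simp add: algebra_simps sum_subtractf sum_distrib_left)
    also have "\<dots> = (A *\<^sub>v z0) $ i - \<zeta> * (A *\<^sub>v zb) $ i"
      using mat_vec_sum[OF A z0c i] mat_vec_sum[OF A zbc i] by simp
    finally show "(\<Sum>j<n. A $$ (i,j) * z $ j) = k (ys!i) y - \<zeta> * k (ys!i) a"
      unfolding Az0 Azb using i n_def by simp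
  qed
  have kz: "\<And>u. (\<Sum>i<n. k (ys!i) u * z $ i) = (k u y - P u y) - \<zeta> * (k u a - P u a)"
  proof -
    fix u
    have "(\<Sum>i<n. k (ys!i) u * z $ i) = (\<Sum>i<n. k (ys!i) u * z0 $ i) - \<zeta> * (\<Sum>i<n. k (ys!i) u * zb $ i)"
      unfolding z_def by (simp add: algebra_simps sum_subtractf sum_distrib_left)
    then show "(\<Sum>i<n. k (ys!i) u * z $ i) = (k u y - P u y) - \<zeta> * (k u a - P u a)"
      unfolding Pxy z0_def zb_def by simp
  qed
  have sP: "s * \<zeta> = P a y" unfolding \<zeta>_def s_def using s unfolding P_def by simp
  have ys': "length (ys @ [a]) = Suc n" unfolding n_def by simp
  have A'z: "Amat k sn (ys @ [a]) *\<^sub>v ze = kern_vec k (ys @ [a]) y"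
  proof (rule eq_vecI)
    show "dim_vec (Amat k sn (ys @ [a]) *\<^sub>v ze) = dim_vec (kern_vec k (ys @ [a]) y)" by simp
    fix i assume "i < dim_vec (kern_vec k (ys @ [a]) y)"
    hence i: "i < Suc n" using ys' by simp
    have "(Amat k sn (ys @ [a]) *\<^sub>v ze) $ i = (\<Sum>j<Suc n. Amat k sn (ys @ [a]) $$ (i,j) * ze $ j)"
      by (rule mat_vec_sum[of _ "Suc n"], insert i ys', auto simp: ze_def)
    also have "\<dots> = (\<Sum>j<n. Amat k sn (ys @ [a]) $$ (i,j) * z $ j) + Amat k sn (ys @ [a]) $$ (i,n) * \<zeta>"
      by (simp add: ze_def)
    also have "\<dots> = k ((ys @ [a])!i) y"
    proof (cases "i < n")
      case True
      have "(\<Sum>j<n. Amat k sn (ys @ [a]) $$ (i,j) * z $ j) = (\<Sum>j<n. A $$ (i,j) * z $ j)"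
        by (rule sum.cong, insert True ys', auto simp: Amat_index A_def n_def nth_append)
      then show ?thesis using True Az[OF True] ys'
        by (auto simp: Amat_index n_def nth_append)
    next
      case False
      hence i: "i = n" using i by simp
      have "(\<Sum>j<n. Amat k sn (ys @ [a]) $$ (i,j) * z $ j) = (\<Sum>j<n. k (ys!j) a * z $ j)"
        by (rule sum.cong, insert i ys' ysX a, auto simp: Amat_index n_def nth_append symk)
      also have "\<dots> = (k a y - P a y) - \<zeta> * (k a a - P a a)" by (rule kz)
      finally show ?thesis using i ys' sP unfolding s_def
        by (auto simp: Amat_index n_def nth_append algebra_simps)
    qed
    finally show "(Amat k sn (ys @ [a]) *\<^sub>v ze) $ i = kern_vec k (ys @ [a]) y $ i"
      using i ys' by simp
  qed
  have R': "reg_inv k sn (ys @ [a]) * Amat k sn (ys @ [a]) = 1\<^sub>m (Suc n)"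
    "reg_inv k sn (ys @ [a]) \<in> carrier_mat (Suc n) (Suc n)"
    using reg_inv_props[of X "ys @ [a]" k sn] X a ys' by auto
  have zec: "ze \<in> carrier_vec (Suc n)" unfolding ze_def by simp
  have Rk: "reg_inv k sn (ys @ [a]) *\<^sub>v kern_vec k (ys @ [a]) y = ze"
    unfolding A'z[symmetric] using R' zec Amat_carrier[of k sn "ys @ [a]", unfolded ys']
    by (subst assoc_mult_mat_vec[symmetric, of _ "Suc n" "Suc n" _ "Suc n"], auto)
  have "post_cov k sn (ys @ [a]) x y = k x y - (\<Sum>i<Suc n. k ((ys @ [a])!i) x * ze $ i)"
  proof -
    have kv: "\<And>i. i < Suc n \<Longrightarrow> kern_vec k (ys@[a]) x $ i = k ((ys@[a])!i) x" using ys' by simp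
    show ?thesis
      unfolding post_cov_def Rk by (subst sprod_sum[of _ "Suc n"], auto simp: ze_def kv intro!: sum.cong)
  qed
  also have "\<dots> = k x y - ((\<Sum>i<n. k (ys!i) x * z $ i) + k a x * \<zeta>)"
  proof -
    have "(\<Sum>i<n. k ((ys @ [a])!i) x * ze $ i) = (\<Sum>i<n. k (ys!i) x * z $ i)"
      by (rule sum.cong, auto simp: nth_append n_def ze_def)
    moreover have "k ((ys @ [a])!n) x * ze $ n = k a x * \<zeta>" by (simp add: ze_def n_def)
    ultimately show ?thesis by simp
  qed
  also have "\<dots> = P x y - \<zeta> * P x a"
    unfolding kz using symk[OF a x] by (simp add: algebra_simps)
  finally show ?thesis unfolding P_def \<zeta>_def s_def by (simp add: P_def)
qed

lemma post_cov_nil: "finite X \<Longrightarrow> psd_kernel X k \<Longrightarrow> sn > 0 \<Longrightarrow> post_cov k sn [] x y = k x y"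
  using post_cov_sum[OF reg_inv_props(1)[of X "[]" k sn]] by simp


lemma psd_quad_shift:
  fixes K :: "'a \<Rightarrow> 'a \<Rightarrow> real"
  assumes "finite X" "a \<in> X" "\<forall>x\<in>X. \<forall>y\<in>X. K x y = K y x"
  shows "(\<Sum>x\<in>X. \<Sum>y\<in>X. (c x + l * (if x = a then 1 else 0)) * (c y + l * (if y = a then 1 else 0)) * K x y)
    = (\<Sum>x\<in>X. \<Sum>y\<in>X. c x * c y * K x y) + 2 * l * (\<Sum>x\<in>X. c x * K x a) + l\<^sup>2 * K a a"
proof -
  have e: "(c x + l * (if x = a then 1 else 0)) * (c y + l * (if y = a then 1 else 0)) * K x y
     = c x * c y * K x y + l * ((if y = a then c x * K x y else 0)) + l * (if x = a then c y * K x y else 0)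
       + l\<^sup>2 * (if x = a then (if y = a then K x y else 0) else 0)" for x y
    by (auto simp: algebra_simps power2_eq_square)
  have s1: "(\<Sum>x\<in>X. \<Sum>y\<in>X. (if y = a then c x * K x y else 0)) = (\<Sum>x\<in>X. c x * K x a)"
    using assms by (simp add: sum.delta')
  have s2': "(\<Sum>x\<in>X. \<Sum>y\<in>X. (if x = a then c y * K x y else 0)) = (\<Sum>y\<in>X. c y * K a y)"
    using assms by (subst sum.swap) (simp add: sum.delta')
  have s2'': "(\<Sum>y\<in>X. c y * K a y) = (\<Sum>x\<in>X. c x * K x a)"
    using assms by (intro sum.cong) auto
  have s3: "(\<Sum>x\<in>X. \<Sum>y\<in>X. (if x = a then (if y = a then K x y else 0) else 0)) = K a a"
  proof -
    have "\<And>x. (\<Sum>y\<in>X. (if x = a then (if y = a then K x y else 0) else 0)) = (if x = a then K a a else 0)"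
      using assms by (case_tac "x = a", simp_all add: sum.delta)
    thus ?thesis using assms by (simp add: sum.delta)
  qed
  have lin: "(\<Sum>x\<in>X. \<Sum>y\<in>X. A x y + l * B x y + l * C x y + l\<^sup>2 * D x y)
    = (\<Sum>x\<in>X. \<Sum>y\<in>X. A x y) + l * (\<Sum>x\<in>X. \<Sum>y\<in>X. B x y) + l * (\<Sum>x\<in>X. \<Sum>y\<in>X. C x y)
      + l\<^sup>2 * (\<Sum>x\<in>X. \<Sum>y\<in>X. D x y)" for A B C D :: "'a \<Rightarrow> 'a \<Rightarrow> real"
    by (simp only: sum.distrib sum_distrib_left)
  show ?thesis unfolding e lin s1 s3 s2' s2'' by simp
qed

lemma psd_diag:
  fixes K :: "'a \<Rightarrow> 'a \<Rightarrow> real"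
  assumes "finite X" "a \<in> X" "psd_kernel X K"
  shows "K a a \<ge> 0"
proof -
  have "0 \<le> (\<Sum>x\<in>X. \<Sum>y\<in>X. (0 + 1 * (if x = a then 1 else 0)) * (0 + 1 * (if y = a then 1 else 0)) * K x y)"
    using assms(3) unfolding psd_kernel_def
    by (elim conjE allE[where x="\<lambda>x. 0 + 1 * (if x = a then 1 else 0)"]) simp
  also have "\<dots> = K a a"
    using psd_quad_shift[OF assms(1,2), of K "\<lambda>_. 0" 1] assms(3) unfolding psd_kernel_def by simp
  finally show ?thesis .
qed

lemma psd_cs:
  fixes K :: "'a \<Rightarrow> 'a \<Rightarrow> real"
  assumes "finite X" "a \<in> X" "psd_kernel X K"
  shows "(\<Sum>x\<in>X. c x * K x a)\<^sup>2 \<le> (\<Sum>x\<in>X. \<Sum>y\<in>X. c x * c y * K x y) * K a a"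
proof -
  define Q where "Q = (\<Sum>x\<in>X. \<Sum>y\<in>X. c x * c y * K x y)"
  define L where "L = (\<Sum>x\<in>X. c x * K x a)"
  have sym: "\<forall>x\<in>X. \<forall>y\<in>X. K x y = K y x" using assms(3) unfolding psd_kernel_def by auto
  have ge: "Q + 2 * l * L + l\<^sup>2 * K a a \<ge> 0" for l
  proof -
    have "0 \<le> (\<Sum>x\<in>X. \<Sum>y\<in>X. (c x + l * (if x = a then 1 else 0)) * (c y + l * (if y = a then 1 else 0)) * K x y)"
      using assms(3) unfolding psd_kernel_def
      by (elim conjE allE[where x="\<lambda>x. c x + l * (if x = a then 1 else 0)"]) simp
    thus ?thesis unfolding psd_quad_shift[OF assms(1,2) sym, of c l] Q_def L_def .
  qed
  show ?thesis
  proof (cases "K a a > 0")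
    case True
    have "Q + 2 * (- L / K a a) * L + (- L / K a a)\<^sup>2 * K a a \<ge> 0" by (rule ge)
    hence "Q - L\<^sup>2 / K a a \<ge> 0" using True by (simp add: power2_eq_square field_simps)
    hence "L\<^sup>2 / K a a \<le> Q" by simp
    thus ?thesis using True unfolding Q_def[symmetric] L_def[symmetric] by (simp add: divide_le_eq)
  next
    case False
    show ?thesis
    proof (cases "L = 0")
      case True
      have "Q \<ge> 0" unfolding Q_def using assms(3) unfolding psd_kernel_def by blast
      moreover have "K a a = 0" using False psd_diag[OF assms] by simp
      ultimately have "Q * K a a \<ge> 0" by simp
      thus ?thesis unfolding Q_def[symmetric] L_def[symmetric] using True by simp
    next
      case L: False
      have "Q + 2 * (- (\<bar>Q\<bar> + 1) / (2 * L)) * L + (- (\<bar>Q\<bar> + 1) / (2 * L))\<^sup>2 * K a a \<ge> 0" by (rule ge)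
      moreover have "(- (\<bar>Q\<bar> + 1) / (2 * L))\<^sup>2 * K a a \<le> 0" using False
        by (simp add: mult_nonneg_nonpos)
      moreover have "2 * (- (\<bar>Q\<bar> + 1) / (2 * L)) * L = - (\<bar>Q\<bar> + 1)" using L by simp
      ultimately have False by linarith
      thus ?thesis ..
    qed
  qed
qed

lemma psd_delta_sums:
  fixes K :: "'a \<Rightarrow> 'a \<Rightarrow> real"
  assumes "finite X" "x \<in> X"
  shows "(\<Sum>z\<in>X. (if z = x then 1 else 0) * K z a) = K x a"
    "(\<Sum>z\<in>X. \<Sum>y\<in>X. (if z = x then 1 else 0) * (if y = x then 1 else 0) * K z y) = K x x"
proof -
  show "(\<Sum>z\<in>X. (if z = x then 1 else 0) * K z a) = K x a"
    using assms by (simp add: sum.delta if_distrib[where f="\<lambda>u. u * _"] cong: if_cong)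
  have "\<And>z. (\<Sum>y\<in>X. (if z = x then 1 else 0) * (if y = x then 1 else 0) * K z y) = (if z = x then K x x else 0)"
    using assms by (case_tac "z = x", simp_all add: sum.delta if_distrib[where f="\<lambda>u. u * _"] cong: if_cong)
  thus "(\<Sum>z\<in>X. \<Sum>y\<in>X. (if z = x then 1 else 0) * (if y = x then 1 else 0) * K z y) = K x x"
    using assms by (simp add: sum.delta)
qed

lemma post_cov_psd:
  assumes "finite X" "set ys \<subseteq> X" "psd_kernel X k" "sn > 0"
  shows "psd_kernel X (post_cov k sn ys)"
  using assms(2)
proof (induction ys rule: rev_induct)
  case Nil
  have "post_cov k sn [] = k" using post_cov_nil[OF assms(1,3,4)] by (intro ext)
  thus ?case using assms(3) by simp
next
  case (snoc a ys)
  define P where "P = post_cov k sn ys"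
  have ys: "set ys \<subseteq> X" and a: "a \<in> X" using snoc.prems by auto
  have psd: "psd_kernel X P" unfolding P_def using snoc.IH ys by simp
  have Paa: "P a a \<ge> 0" by (rule psd_diag[OF assms(1) a psd])
  define s where "s = P a a + sn\<^sup>2"
  have s: "s > 0" unfolding s_def using Paa assms(4) by (simp add: add_nonneg_pos)
  have upd: "\<And>x y. x \<in> X \<Longrightarrow> post_cov k sn (ys @ [a]) x y = P x y - P x a * P a y / s"
    unfolding P_def s_def using post_cov_update[OF assms(1) ys assms(3,4) a] s unfolding s_def P_def by simp
  have sym: "\<forall>x\<in>X. \<forall>y\<in>X. P x y = P y x" using psd unfolding psd_kernel_def by auto
  show ?case unfolding psd_kernel_def
  proof (intro conjI ballI allI)
    fix x y assume "x \<in> X" "y \<in> X"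
    thus "post_cov k sn (ys @ [a]) x y = post_cov k sn (ys @ [a]) y x"
      using upd sym a by (simp add: mult.commute)
  next
    fix c :: "'a \<Rightarrow> real"
    define Q where "Q = (\<Sum>x\<in>X. \<Sum>y\<in>X. c x * c y * P x y)"
    define L where "L = (\<Sum>x\<in>X. c x * P x a)"
    have "(\<Sum>x\<in>X. \<Sum>y\<in>X. c x * c y * post_cov k sn (ys @ [a]) x y)
        = (\<Sum>x\<in>X. \<Sum>y\<in>X. c x * c y * P x y - (c x * P x a) * (c y * P a y) / s)"
      by (intro sum.cong refl, simp add: upd algebra_simps)
    also have "\<dots> = Q - (\<Sum>x\<in>X. c x * P x a) * (\<Sum>y\<in>X. c y * P a y) / s"
      unfolding Q_def by (simp add: sum_subtractf sum_product sum_divide_distrib)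
    also have "(\<Sum>y\<in>X. c y * P a y) = L" unfolding L_def using sym a by (intro sum.cong) auto
    finally have eq: "(\<Sum>x\<in>X. \<Sum>y\<in>X. c x * c y * post_cov k sn (ys @ [a]) x y) = Q - L\<^sup>2 / s"
      unfolding L_def by (simp add: power2_eq_square)
    have cs: "L\<^sup>2 \<le> Q * P a a" unfolding L_def Q_def by (rule psd_cs[OF assms(1) a psd])
    have Q0: "Q \<ge> 0" unfolding Q_def using psd unfolding psd_kernel_def by blast
    have "Q * P a a \<le> Q * s" unfolding s_def using Q0 assms(4) by (simp add: mult_left_mono)
    hence "L\<^sup>2 / s \<le> Q" using cs s by (simp add: divide_le_eq)
    thus "0 \<le> (\<Sum>x\<in>X. \<Sum>y\<in>X. c x * c y * post_cov k sn (ys @ [a]) x y)" unfolding eq by simp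
  qed
qed

lemma post_cov_var_step:
  assumes "finite X" "set ys \<subseteq> X" "psd_kernel X k" "sn > 0" "a \<in> X" "x \<in> X"
  shows "post_cov k sn ys x x \<le> (1 + post_cov k sn ys a a / sn\<^sup>2) * post_cov k sn (ys @ [a]) x x"
proof -
  define P where "P = post_cov k sn ys"
  have psd: "psd_kernel X P" unfolding P_def by (rule post_cov_psd[OF assms(1-4)])
  have Paa: "P a a \<ge> 0" by (rule psd_diag[OF assms(1,5) psd])
  define s where "s = P a a + sn\<^sup>2"
  have s: "s > 0" unfolding s_def using Paa assms(4) by (simp add: add_nonneg_pos)
  have upd: "post_cov k sn (ys @ [a]) x x = P x x - P x a * P a x / s"
    unfolding P_def s_def using post_cov_update[OF assms(1-5) assms(6)] s unfolding s_def P_def by simp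
  have sym: "P a x = P x a" using psd assms(5,6) unfolding psd_kernel_def by auto
  have cs: "(P x a)\<^sup>2 \<le> P x x * P a a"
    using psd_cs[OF assms(1,5) psd, of "\<lambda>z. if z = x then 1 else 0"] psd_delta_sums(1)[OF assms(1,6), of P a] psd_delta_sums(2)[OF assms(1,6), of P] by simp
  have "P x x * sn\<^sup>2 / s \<le> post_cov k sn (ys @ [a]) x x"
  proof -
    have "P x x * sn\<^sup>2 / s = P x x - P x x * P a a / s" using s unfolding s_def by (simp add: field_simps)
    also have "\<dots> \<le> P x x - (P x a)\<^sup>2 / s" using cs s by (simp add: divide_right_mono)
    finally show ?thesis unfolding upd sym by (simp add: power2_eq_square)
  qed
  hence "(s / sn\<^sup>2) * (P x x * sn\<^sup>2 / s) \<le> (s / sn\<^sup>2) * post_cov k sn (ys @ [a]) x x"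
    using s by (intro mult_left_mono) auto
  moreover have "(s / sn\<^sup>2) * (P x x * sn\<^sup>2 / s) = P x x" using s assms(4) by simp
  moreover have "s / sn\<^sup>2 = 1 + P a a / sn\<^sup>2" unfolding s_def using assms(4) by (simp add: field_simps)
  ultimately show ?thesis unfolding P_def by simp
qed


lemma det_schur_first:
  fixes M :: "real mat"
  assumes M: "M \<in> carrier_mat (Suc m) (Suc m)" and al: "M $$ (0,0) \<noteq> 0"
  shows "det M = M $$ (0,0) * det (Matrix.mat m m (\<lambda>(i,j). M $$ (Suc i, Suc j) - M $$ (Suc i, 0) * M $$ (0, Suc j) / M $$ (0,0)))"
proof -
  define \<alpha> where "\<alpha> = M $$ (0,0)"
  define L where "L = Matrix.mat (Suc m) (Suc m) (\<lambda>(i,j). if i = j then 1 else if j = 0 then - M $$ (i,0) / \<alpha> else (0::real))"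
  have Lc: "L \<in> carrier_mat (Suc m) (Suc m)" unfolding L_def by simp
  have detL: "det L = 1"
  proof -
    have "det L = prod_list (diag_mat L)"
      by (rule det_lower_triangular[OF _ Lc], auto simp: L_def)
    also have "diag_mat L = map (\<lambda>i. 1) [0..<Suc m]"
      unfolding diag_mat_def by (rule map_cong, simp add: L_def, auto simp add: L_def)
    finally show ?thesis by (simp add: map_replicate_const)
  qed
  define N where "N = L * M"
  have Nc: "N \<in> carrier_mat (Suc m) (Suc m)" unfolding N_def using Lc M by simp
  have Nidx: "N $$ (i,j) = M $$ (i,j) - (if i = 0 then 0 else M $$ (i,0) * M $$ (0,j) / \<alpha>)"
    if i: "i < Suc m" and j: "j < Suc m" for i j
  proof -
    have "N $$ (i,j) = (\<Sum>k<Suc m. L $$ (i,k) * M $$ (k,j))"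
      unfolding N_def using i j M Lc by (auto simp: scalar_prod_def atLeast0LessThan intro!: sum.cong)
    also have "\<dots> = (\<Sum>k<Suc m. (if k = i then M $$ (k,j) else 0) + (if k = 0 \<and> i \<noteq> 0 then - M $$ (i,0) / \<alpha> * M $$ (k,j) else 0))"
      by (intro sum.cong refl, insert i, auto simp: L_def)
    also have "\<dots> = M $$ (i,j) - (if i = 0 then 0 else M $$ (i,0) * M $$ (0,j) / \<alpha>)"
      unfolding sum.distrib using i by (cases "i = 0") (simp_all add: sum.delta)
    finally show ?thesis .
  qed
  have "det N = det L * det M" unfolding N_def by (rule det_mult[OF Lc M])
  hence dN: "det N = det M" using detL by simp
  have "det N = (\<Sum>i<Suc m. N $$ (i,0) * cofactor N i 0)"
    by (rule laplace_expansion_column[OF Nc], simp)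
  also have "\<dots> = N $$ (0,0) * cofactor N 0 0"
  proof -
    have "\<forall>i\<in>{..<Suc m}. i \<noteq> 0 \<longrightarrow> N $$ (i,0) * cofactor N i 0 = 0"
      using Nidx al unfolding \<alpha>_def by auto
    thus ?thesis by (subst sum.remove[of _ 0], auto intro!: sum.neutral)
  qed
  also have "N $$ (0,0) = \<alpha>" using Nidx[of 0 0] by (simp add: \<alpha>_def)
  also have "cofactor N 0 0 = det (mat_delete N 0 0)" unfolding cofactor_def by simp
  also have "mat_delete N 0 0 = Matrix.mat m m (\<lambda>(i,j). M $$ (Suc i, Suc j) - M $$ (Suc i, 0) * M $$ (0, Suc j) / M $$ (0,0))"
    by (rule eq_matI, insert Nc, auto simp: mat_delete_def Nidx \<alpha>_def)
  finally show ?thesis using dN unfolding \<alpha>_def by simp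
qed


definition Dm :: "('a \<Rightarrow> 'a \<Rightarrow> real) \<Rightarrow> real \<Rightarrow> 'a list \<Rightarrow> 'a list \<Rightarrow> real" where
  "Dm k sn ys as = det (1\<^sub>m (length as) + (1 / sn\<^sup>2) \<cdot>\<^sub>m gram_mat (post_cov k sn ys) as)"

lemma info_gain_Dm: "info_gain k sn ys as = 1/2 * ln (Dm k sn ys as)"
  unfolding info_gain_def Dm_def by simp

lemma Dm_nil: "Dm k sn ys [] = 1"
  unfolding Dm_def by (rule det_dim_zero, simp add: gram_mat_def)

lemma schur_alg:
  fixes q p d u v w :: real
  assumes "q > 0" "p + q \<noteq> 0"
  shows "d + (1 / q) * u - ((1 / q) * v) * ((1 / q) * w) / (1 + p / q) = d + (1 / q) * (u - v * w / (p + q))"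
proof -
  have "1 + p/q = (p+q)/q" using assms by (simp add: field_simps)
  hence "((1 / q) * v) * ((1 / q) * w) / (1 + p / q) = (1 / q) * (v * w / (p + q))" using assms by (simp add: field_simps)
  thus ?thesis by (simp add: right_diff_distrib)
qed

lemma Dm_cons:
  assumes X: "finite X" "set ys \<subseteq> X" "psd_kernel X k" "sn > 0" and a: "a \<in> X" and as: "set as \<subseteq> X"
  shows "Dm k sn ys (a # as) = (1 + post_cov k sn ys a a / sn\<^sup>2) * Dm k sn (ys @ [a]) as"
proof -
  define P where "P = post_cov k sn ys"
  define m where "m = length as"
  define M where "M = 1\<^sub>m (Suc m) + (1 / sn\<^sup>2) \<cdot>\<^sub>m gram_mat P (a # as)"
  have Mc: "M \<in> carrier_mat (Suc m) (Suc m)" unfolding M_def m_def gram_mat_def by auto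
  have Midx: "M $$ (i,j) = (if i = j then 1 else 0) + (1 / sn\<^sup>2) * P ((a#as)!i) ((a#as)!j)"
    if "i < Suc m" "j < Suc m" for i j
    using that unfolding M_def m_def gram_mat_def by auto
  have psd: "psd_kernel X P" unfolding P_def by (rule post_cov_psd[OF X])
  have Paa: "P a a \<ge> 0" by (rule psd_diag[OF X(1) a psd])
  have M00: "M $$ (0,0) = 1 + P a a / sn\<^sup>2" using Midx[of 0 0] by simp
  have M00nz: "M $$ (0,0) \<noteq> 0" unfolding M00 using Paa X(4)
    by (smt (verit) divide_nonneg_pos zero_less_power)
  have s: "P a a + sn\<^sup>2 \<noteq> 0" using Paa X(4) by (smt (verit) zero_less_power)
  have "Dm k sn ys (a # as) = det M" unfolding Dm_def M_def P_def m_def by simp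
  also have "\<dots> = M $$ (0,0) * det (Matrix.mat m m (\<lambda>(i,j). M $$ (Suc i, Suc j) - M $$ (Suc i, 0) * M $$ (0, Suc j) / M $$ (0,0)))"
    by (rule det_schur_first[OF Mc M00nz])
  also have "Matrix.mat m m (\<lambda>(i,j). M $$ (Suc i, Suc j) - M $$ (Suc i, 0) * M $$ (0, Suc j) / M $$ (0,0))
      = 1\<^sub>m m + (1 / sn\<^sup>2) \<cdot>\<^sub>m gram_mat (post_cov k sn (ys @ [a])) as"
  proof (rule eq_matI)
    fix i j assume ij: "i < dim_row (1\<^sub>m m + (1 / sn\<^sup>2) \<cdot>\<^sub>m gram_mat (post_cov k sn (ys @ [a])) as)"
      "j < dim_col (1\<^sub>m m + (1 / sn\<^sup>2) \<cdot>\<^sub>m gram_mat (post_cov k sn (ys @ [a])) as)"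
    hence i: "i < m" and j: "j < m" by (auto simp: m_def gram_mat_def)
    have xi: "as ! i \<in> X" using as i unfolding m_def by auto
    have upd: "post_cov k sn (ys @ [a]) (as!i) (as!j) = P (as!i) (as!j) - P (as!i) a * P a (as!j) / (P a a + sn\<^sup>2)"
      unfolding P_def by (rule post_cov_update[OF X a xi], fold P_def, rule s)
    have "M $$ (Suc i, Suc j) - M $$ (Suc i, 0) * M $$ (0, Suc j) / M $$ (0,0)
        = (if i = j then 1 else 0) + (1 / sn\<^sup>2) * P (as!i) (as!j)
          - ((1 / sn\<^sup>2) * P (as!i) a) * ((1 / sn\<^sup>2) * P a (as!j)) / (1 + P a a / sn\<^sup>2)"
      using Midx i j M00 by simp
    also have "\<dots> = (if i = j then 1 else 0) + (1 / sn\<^sup>2) * post_cov k sn (ys @ [a]) (as!i) (as!j)"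
      unfolding upd by (rule schur_alg, insert X(4) s, auto)
    finally show "Matrix.mat m m (\<lambda>(i,j). M $$ (Suc i, Suc j) - M $$ (Suc i, 0) * M $$ (0, Suc j) / M $$ (0,0)) $$ (i,j)
      = (1\<^sub>m m + (1 / sn\<^sup>2) \<cdot>\<^sub>m gram_mat (post_cov k sn (ys @ [a])) as) $$ (i,j)"
      using i j unfolding m_def gram_mat_def by simp
  qed (auto simp: m_def gram_mat_def)
  finally show ?thesis unfolding M00 Dm_def m_def P_def by simp
qed

lemma Dm_chain:
  assumes X: "finite X" "psd_kernel X k" "sn > 0" and x: "x \<in> X"
  shows "set ys \<subseteq> X \<Longrightarrow> set as \<subseteq> X \<Longrightarrow>
    Dm k sn ys as > 0 \<and> post_cov k sn ys x x \<le> Dm k sn ys as * post_cov k sn (ys @ as) x x"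
proof (induction as arbitrary: ys)
  case Nil
  then show ?case by (simp add: Dm_nil)
next
  case (Cons a as)
  have a: "a \<in> X" and as: "set as \<subseteq> X" using Cons.prems by auto
  have ys': "set (ys @ [a]) \<subseteq> X" using Cons.prems by auto
  have IH: "Dm k sn (ys @ [a]) as > 0 \<and> post_cov k sn (ys @ [a]) x x \<le> Dm k sn (ys @ [a]) as * post_cov k sn (ys @ [a] @ as) x x"
    using Cons.IH[OF ys' as] by simp
  have Paa: "post_cov k sn ys a a \<ge> 0" by (rule psd_diag[OF X(1) a post_cov_psd[OF X(1) Cons.prems(1) X(2,3)]])
  define f where "f = 1 + post_cov k sn ys a a / sn\<^sup>2"
  have f: "f > 0" unfolding f_def using Paa X(3) by (smt (verit) divide_nonneg_pos zero_less_power)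
  have D: "Dm k sn ys (a # as) = f * Dm k sn (ys @ [a]) as"
    unfolding f_def by (rule Dm_cons[OF X(1) Cons.prems(1) X(2,3) a as])
  have step: "post_cov k sn ys x x \<le> f * post_cov k sn (ys @ [a]) x x"
    unfolding f_def by (rule post_cov_var_step[OF X(1) Cons.prems(1) X(2,3) a x])
  also have "\<dots> \<le> f * (Dm k sn (ys @ [a]) as * post_cov k sn (ys @ [a] @ as) x x)"
    using IH f by (intro mult_left_mono) auto
  finally show ?case unfolding D using IH f by (simp add: mult.assoc)
qed

lemma sd_ratio:
  assumes X: "finite X" "psd_kernel X k" "sn > 0" and x: "x \<in> X"
    and ys: "set ys \<subseteq> X" and as: "set as \<subseteq> X" and C: "info_gain k sn ys as \<le> C"
  shows "post_sd k sn ys x \<le> exp C * post_sd k sn (ys @ as) x"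
proof -
  from Dm_chain[OF X x ys as] have D: "Dm k sn ys as > 0"
    and le: "post_cov k sn ys x x \<le> Dm k sn ys as * post_cov k sn (ys @ as) x x" by auto
  have "Dm k sn ys as = exp (2 * info_gain k sn ys as)" unfolding info_gain_Dm using D by simp
  also have "\<dots> \<le> exp (2 * C)" using C by simp
  finally have DC: "Dm k sn ys as \<le> exp (2 * C)" .
  have P0: "post_cov k sn (ys @ as) x x \<ge> 0"
    by (rule psd_diag[OF X(1) x post_cov_psd[OF X(1) _ X(2,3)]], insert ys as, auto)
  have "post_cov k sn ys x x \<le> exp (2 * C) * post_cov k sn (ys @ as) x x"
    using le DC P0 by (smt (verit) mult_right_mono)
  hence "sqrt (post_cov k sn ys x x) \<le> sqrt (exp (2 * C) * post_cov k sn (ys @ as) x x)"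
    by (rule real_sqrt_le_mono)
  also have "\<dots> = exp C * sqrt (post_cov k sn (ys @ as) x x)"
  proof -
    have e: "exp (2 * C) = exp C * exp C" by (subst mult_exp_exp) simp
    show ?thesis unfolding real_sqrt_mult e real_sqrt_abs2 by simp
  qed
  finally show ?thesis unfolding post_sd_def .
qed


lemma nd_alt: "s > 0 \<Longrightarrow> normal_density m s x = exp (- ((x - m) / s)\<^sup>2 / 2) / (s * sqrt (2 * pi))"
  unfolding normal_density_def by (simp add: real_sqrt_mult power_divide field_simps)

lemma nd_deriv: "s > 0 \<Longrightarrow> ((\<lambda>x. normal_density m s x) has_real_derivative (- (x - m) / s\<^sup>2 * normal_density m s x)) (at x)"
proof -
  assume s: "s > 0"
  have e: "((\<lambda>x. exp (- (x - m)\<^sup>2 / (2 * s\<^sup>2))) has_real_derivative exp (- (x - m)\<^sup>2 / (2 * s\<^sup>2)) * (- (x - m) / s\<^sup>2)) (at x)"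
    using s by (auto intro!: derivative_eq_intros simp: field_simps power2_eq_square)
  show ?thesis unfolding normal_density_def
    using DERIV_cmult[OF e, of "1 / sqrt (2 * pi * s\<^sup>2)"] by (simp add: mult_ac)
qed

lemma nd_lim: "s > 0 \<Longrightarrow> ((\<lambda>x. normal_density m s x) \<longlongrightarrow> 0) at_top"
  unfolding normal_density_def by real_asymp

lemma tail_upper:
  assumes M: "prob_space M" and Y: "normal_rv M Y m v" and v: "v \<ge> 0" and a: "a > 0"
  shows "measure M {\<omega>\<in>space M. Y \<omega> > m + a * sqrt v} \<le> exp (- a\<^sup>2 / 2) / (a * sqrt (2 * pi))"
proof -
  interpret prob_space M by (rule M)
  have Ym: "Y \<in> borel_measurable M" using Y unfolding normal_rv_def by simp
  have Sm: "{\<omega>\<in>space M. Y \<omega> > m + a * sqrt v} \<in> sets M" using Ym by measurable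
  have R: "exp (- a\<^sup>2 / 2) / (a * sqrt (2 * pi)) \<ge> 0" using a by simp
  show ?thesis
  proof (cases "v = 0")
    case True
    hence AE: "AE \<omega> in M. Y \<omega> = m" using Y unfolding normal_rv_def by simp
    have "measure M {\<omega>\<in>space M. Y \<omega> > m + a * sqrt v} = measure M {}"
      by (rule measure_eq_AE, insert AE Sm True, auto)
    thus ?thesis using R by simp
  next
    case False
    define s where "s = sqrt v"
    have s: "s > 0" unfolding s_def using v False by simp
    have D: "distributed M lborel Y (normal_density m s)" using Y False unfolding normal_rv_def s_def by simp
    define c where "c = m + a * s"
    define g where "g x = (x - m) / (a * s) * normal_density m s x" for x
    define G where "G = (\<lambda>x. - (s / a) * normal_density m s x)"
    have eqset: "{\<omega>\<in>space M. Y \<omega> > m + a * sqrt v} = Y -` {c<..} \<inter> space M"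
      unfolding c_def s_def by auto
    have "emeasure M (Y -` {c<..} \<inter> space M) = (\<integral>\<^sup>+x\<in>{c<..}. normal_density m s x \<partial>lborel)"
      by (rule distributed_emeasure[OF D], simp)
    also have "\<dots> \<le> (\<integral>\<^sup>+x\<in>{c..}. ennreal (g x) \<partial>lborel)"
    proof (rule nn_integral_mono)
      fix x
      show "ennreal (normal_density m s x) * indicator {c<..} x \<le> ennreal (g x) * indicator {c..} x"
      proof (cases "x > c")
        case True
        have "1 \<le> (x - m) / (a * s)" using True a s unfolding c_def by (simp add: field_simps)
        hence "normal_density m s x \<le> g x" unfolding g_def
          using mult_right_mono[of 1 "(x - m) / (a * s)" "normal_density m s x"] by simp
        thus ?thesis using True by (simp add: indicator_def ennreal_leI)
      qed simp
    qed
    also have "\<dots> = ennreal (0 - G c)"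
    proof (rule nn_integral_FTC_atLeast)
      show "g \<in> borel_measurable borel" unfolding g_def by measurable
      fix x assume x: "c \<le> x"
      have eqd: "- (s / a) * (- (x - m) / s\<^sup>2 * normal_density m s x) = g x"
        unfolding g_def using s a by (simp add: field_simps power2_eq_square)
      show "(G has_real_derivative g x) (at x)"
        unfolding G_def eqd[symmetric] by (rule DERIV_cmult[OF nd_deriv[OF s]])
      have "a * s > 0" using a s by simp
      hence "x - m \<ge> 0" using x unfolding c_def by linarith
      thus "0 \<le> g x" unfolding g_def using a s by (intro mult_nonneg_nonneg divide_nonneg_pos) auto
    next
      show "(G \<longlongrightarrow> 0) at_top" unfolding G_def using tendsto_mult_left[OF nd_lim[OF s], of "- (s / a)"] by simp
    qed
    also have "0 - G c = exp (- a\<^sup>2 / 2) / (a * sqrt (2 * pi))"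
      unfolding G_def c_def nd_alt[OF s] using s a by (simp add: field_simps)
    finally have "emeasure M {\<omega>\<in>space M. Y \<omega> > m + a * sqrt v} \<le> ennreal (exp (- a\<^sup>2 / 2) / (a * sqrt (2 * pi)))"
      unfolding eqset .
    thus ?thesis using R by (simp add: emeasure_eq_measure)
  qed
qed

lemma tail_lower:
  assumes M: "prob_space M" and Y: "normal_rv M Y m v" and v: "v \<ge> 0"
  shows "measure M {\<omega>\<in>space M. Y \<omega> \<ge> m + sqrt v} \<ge> (exp (- 1 / 2) - exp (- 2)) / (2 * sqrt (2 * pi))"
proof -
  interpret prob_space M by (rule M)
  have Ym: "Y \<in> borel_measurable M" using Y unfolding normal_rv_def by simp
  have Sm: "{\<omega>\<in>space M. Y \<omega> \<ge> m + sqrt v} \<in> sets M" using Ym by measurable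
  have L1: "(exp (- 1 / 2) - exp (- 2)) / (2 * sqrt (2 * pi)) \<le> 1"
  proof -
    have e1: "exp (- 1 / 2) \<le> (1::real)" by simp
    have e2: "exp (-2) \<ge> (0::real)" by simp
    have h: "sqrt (2 * pi) \<ge> 1" using pi_gt3 by simp
    have "exp (- 1 / 2) - exp (- 2) \<le> 2 * sqrt (2 * pi)" using e1 e2 h by linarith
    thus ?thesis using h by (simp add: divide_le_eq)
  qed
  show ?thesis
  proof (cases "v = 0")
    case True
    hence AE: "AE \<omega> in M. Y \<omega> = m" using Y unfolding normal_rv_def by simp
    have "measure M {\<omega>\<in>space M. Y \<omega> \<ge> m + sqrt v} = measure M (space M)"
      by (rule measure_eq_AE, insert AE Sm True, auto)
    thus ?thesis using L1 prob_space by simp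
  next
    case False
    define s where "s = sqrt v"
    have s: "s > 0" unfolding s_def using v False by simp
    have D: "distributed M lborel Y (normal_density m s)" using Y False unfolding normal_rv_def s_def by simp
    define c where "c = m + s"
    define d where "d = m + 2 * s"
    define g where "g x = (x - m) / (2 * s) * normal_density m s x" for x
    define G where "G = (\<lambda>x. - (s / 2) * normal_density m s x)"
    have eqset: "{\<omega>\<in>space M. Y \<omega> \<ge> m + sqrt v} = Y -` {c..} \<inter> space M"
      unfolding c_def s_def by auto
    have "ennreal (G d - G c) = (\<integral>\<^sup>+x\<in>{c..d}. ennreal (g x) \<partial>lborel)"
    proof (rule nn_integral_FTC_Icc[symmetric])
      show "g \<in> borel_measurable borel" unfolding g_def by measurable
      fix x assume x: "x \<in> {c..d}"
      have eqd: "- (s / 2) * (- (x - m) / s\<^sup>2 * normal_density m s x) = g x"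
        unfolding g_def using s by (simp add: field_simps power2_eq_square)
      show "(G has_real_derivative g x) (at x)"
        unfolding G_def eqd[symmetric] by (rule DERIV_cmult[OF nd_deriv[OF s]])
      have "x - m \<ge> 0" using x s unfolding c_def by simp
      thus "0 \<le> g x" unfolding g_def using s by (intro mult_nonneg_nonneg divide_nonneg_pos) auto
    next
      show "c \<le> d" unfolding c_def d_def using s by simp
    qed
    also have "\<dots> \<le> (\<integral>\<^sup>+x\<in>{c..}. normal_density m s x \<partial>lborel)"
    proof (rule nn_integral_mono)
      fix x
      show "ennreal (g x) * indicator {c..d} x \<le> ennreal (normal_density m s x) * indicator {c..} x"
      proof (cases "x \<in> {c..d}")
        case True
        have "(x - m) / (2 * s) \<le> 1" using True s unfolding c_def d_def by (simp add: field_simps)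
        hence "g x \<le> normal_density m s x" unfolding g_def
          using mult_right_mono[of "(x - m) / (2 * s)" 1 "normal_density m s x"] by simp
        thus ?thesis using True by (simp add: indicator_def ennreal_leI)
      qed simp
    qed
    also have "\<dots> = emeasure M (Y -` {c..} \<inter> space M)"
      by (rule distributed_emeasure[OF D, symmetric], simp)
    also have "G d - G c = (exp (- 1 / 2) - exp (- 2)) / (2 * sqrt (2 * pi))"
      unfolding G_def c_def d_def nd_alt[OF s] using s by (simp add: field_simps)
    finally have "ennreal ((exp (- 1 / 2) - exp (- 2)) / (2 * sqrt (2 * pi))) \<le> emeasure M {\<omega>\<in>space M. Y \<omega> \<ge> m + sqrt v}"
      unfolding eqset .
    thus ?thesis by (simp add: emeasure_eq_measure)
  qed
qed


lemma num_e: "exp (1::real) \<ge> 9/4" "exp (1::real) \<le> 3" "exp (- 1/2 :: real) \<ge> 4/7" "exp (-2::real) \<le> 16/81"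
  "exp (3/2::real) \<le> 8"
proof -
  have h1: "exp (1/2::real) \<ge> 3/2" using exp_ge_add_one_self[of "1/2::real"] by simp
  have h2: "exp (1/2::real) \<le> 7/4" using exp_bound[of "1/2::real"] by (simp add: power2_eq_square)
  have e: "exp (1::real) = exp (1/2) * exp (1/2)" by (subst mult_exp_exp) simp
  show g: "exp (1::real) \<ge> 9/4" unfolding e using h1 mult_mono[OF h1 h1] by simp
  show l: "exp (1::real) \<le> 3" using exp_bound[of "1::real"] by simp
  have "exp (- 1/2 :: real) = 1 / exp (1/2)" using exp_minus[of "1/2::real"] by (simp add: inverse_eq_divide)
  moreover have "1 / (7/4) \<le> 1 / exp (1/2::real)" by (rule divide_left_mono[OF h2]) auto
  ultimately show "exp (- 1/2 :: real) \<ge> 4/7" by simp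
  have "exp (-2 :: real) = 1 / exp 2" using exp_minus[of "2::real"] by (simp add: inverse_eq_divide)
  moreover have "exp (2::real) = exp 1 * exp 1" by (subst mult_exp_exp) simp
  ultimately have "exp (-2 :: real) = 1 / (exp 1 * exp 1)" by simp
  moreover have "exp 1 * exp (1::real) \<ge> 81/16" using mult_mono[OF g g] by simp
  moreover have "1 / (exp 1 * exp (1::real)) \<le> 1 / (81/16)" by (rule divide_left_mono) (use \<open>exp 1 * exp (1::real) \<ge> 81/16\<close> in auto)
  ultimately show "exp (-2::real) \<le> 16/81" by simp
  have "exp (3/2::real) = exp 1 * exp (1/2)" by (simp add: mult_exp_exp)
  also have "\<dots> \<le> 3 * (7/4)" using mult_mono[OF l h2] by simp
  finally show "exp (3/2::real) \<le> 8" by simp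
qed

lemma num_main:
  fixes aa :: real
  assumes aa: "aa \<ge> 17/10"
  shows "(exp (- 1 / 2) - exp (- 2)) / (2 * sqrt (2 * pi)) - 1 / (4 * aa * sqrt (2 * pi)) \<ge> ts_p / 5"
proof -
  have "sqrt 2 \<le> sqrt ((71/50::real)^2)" by (rule real_sqrt_le_mono) (simp add: power2_eq_square)
  hence r: "sqrt 2 \<le> (71/50::real)" by simp
  have r0: "sqrt 2 > (0::real)" by simp
  have sp: "sqrt pi > 0" by simp
  have s2: "sqrt (2 * pi) = sqrt 2 * sqrt pi" by (simp add: real_sqrt_mult)
  have "(exp (- 1 / 2) - exp (- 2)) / (2 * sqrt (2 * pi)) - 1 / (4 * aa * sqrt (2 * pi))
      \<ge> (4/7 - 16/81) / (2 * sqrt (2 * pi)) - 1 / (4 * (17/10) * sqrt (2 * pi))"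
  proof -
    have "(4/7 - 16/81) / (2 * sqrt (2 * pi)) \<le> (exp (- 1 / 2) - exp (- 2)) / (2 * sqrt (2 * pi))"
      using num_e by (intro divide_right_mono) auto
    moreover have "1 / (4 * aa * sqrt (2 * pi)) \<le> 1 / (4 * (17/10) * sqrt (2 * pi))"
      using aa by (intro divide_left_mono mult_right_mono mult_pos_pos) auto
    ultimately show ?thesis by linarith
  qed
  also have "(4/7 - 16/81) / (2 * sqrt (2 * pi)) - 1 / (4 * (17/10) * sqrt (2 * pi))
      = (1/sqrt pi) * ((4/7 - 16/81) / 2 - 10 / 68) / sqrt 2"
    unfolding s2 using r0 sp by (simp add: field_simps)
  also have "\<dots> \<ge> (1/sqrt pi) * ((4/7 - 16/81) / 2 - 10 / 68) / (71/50)"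
    using r r0 sp by (intro divide_left_mono mult_nonneg_nonneg) auto
  finally have A: "(exp (- 1 / 2) - exp (- 2)) / (2 * sqrt (2 * pi)) - 1 / (4 * aa * sqrt (2 * pi))
      \<ge> (1/sqrt pi) * ((4/7 - 16/81) / 2 - 10 / 68) / (71/50)" by linarith
  have "ts_p / 5 = (1/sqrt pi) * (1 / (20 * exp 1))" unfolding ts_p_def by (simp add: field_simps)
  also have "\<dots> \<le> (1/sqrt pi) * (1 / (20 * (9/4)))"
    using num_e sp by (intro mult_left_mono divide_left_mono) auto
  also have "\<dots> \<le> (1/sqrt pi) * ((4/7 - 16/81) / 2 - 10 / 68) / (71/50)"
    using sp by (simp add: field_simps)
  finally show ?thesis using A by linarith
qed


lemma gf_marg:
  assumes G: "gaussian_field M F X m K" and X: "finite X" and x: "x \<in> X"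
  shows "normal_rv M (\<lambda>\<omega>. F \<omega> x) (m x) (K x x)" "normal_rv M (\<lambda>\<omega>. - F \<omega> x) (- m x) (K x x)"
proof -
  define c where "c = (\<lambda>y. if y = x then 1 else (0::real))"
  have "normal_rv M (\<lambda>\<omega>. \<Sum>y\<in>X. c y * F \<omega> y) (\<Sum>y\<in>X. c y * m y) (\<Sum>y\<in>X. \<Sum>y'\<in>X. c y * c y' * K y y')"
    using G unfolding gaussian_field_def by blast
  moreover have "(\<lambda>\<omega>. \<Sum>y\<in>X. c y * F \<omega> y) = (\<lambda>\<omega>. F \<omega> x)" unfolding c_def using X x
    by (simp add: if_distrib[where f="\<lambda>u. u * _"] sum.delta cong: if_cong)
  moreover have "(\<Sum>y\<in>X. c y * m y) = m x" unfolding c_def using X x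
    by (simp add: if_distrib[where f="\<lambda>u. u * _"] sum.delta cong: if_cong)
  moreover have "(\<Sum>y\<in>X. \<Sum>y'\<in>X. c y * c y' * K y y') = K x x"
    unfolding c_def by (rule psd_delta_sums(2)[OF X x])
  ultimately show "normal_rv M (\<lambda>\<omega>. F \<omega> x) (m x) (K x x)" by simp
  define d where "d = (\<lambda>y. if y = x then -1 else (0::real))"
  have "normal_rv M (\<lambda>\<omega>. \<Sum>y\<in>X. d y * F \<omega> y) (\<Sum>y\<in>X. d y * m y) (\<Sum>y\<in>X. \<Sum>y'\<in>X. d y * d y' * K y y')"
    using G unfolding gaussian_field_def by blast
  moreover have "(\<lambda>\<omega>. \<Sum>y\<in>X. d y * F \<omega> y) = (\<lambda>\<omega>. - F \<omega> x)" unfolding d_def using X x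
    by (simp add: if_distrib[where f="\<lambda>u. u * _"] sum.delta cong: if_cong)
  moreover have "(\<Sum>y\<in>X. d y * m y) = - m x" unfolding d_def using X x
    by (simp add: if_distrib[where f="\<lambda>u. u * _"] sum.delta cong: if_cong)
  moreover have "(\<Sum>y\<in>X. \<Sum>y'\<in>X. d y * d y' * K y y') = K x x"
  proof -
    have "(\<Sum>y\<in>X. \<Sum>y'\<in>X. d y * d y' * K y y') = (\<Sum>y\<in>X. \<Sum>y'\<in>X. c y * c y' * K y y')"
      unfolding c_def d_def by (intro sum.cong refl) auto
    also have "\<dots> = K x x" unfolding c_def by (rule psd_delta_sums(2)[OF X x])
    finally show ?thesis .
  qed
  ultimately show "normal_rv M (\<lambda>\<omega>. - F \<omega> x) (- m x) (K x x)" by simp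
qed

lemma integrable_fin:
  assumes M: "prob_space M" and X: "finite X" and xt: "xt \<in> measurable M (count_space UNIV)"
    and xtX: "\<forall>\<omega>\<in>space M. xt \<omega> \<in> X"
  shows "integrable M (\<lambda>\<omega>. (h (xt \<omega>) :: real))"
proof -
  interpret prob_space M by (rule M)
  have m: "(\<lambda>\<omega>. h (xt \<omega>)) \<in> borel_measurable M"
    by (rule measurable_compose[OF xt], simp)
  show ?thesis
  proof (rule integrable_const_bound[where B="\<Sum>x\<in>X. \<bar>h x\<bar>"])
    show "AE \<omega> in M. norm (h (xt \<omega>)) \<le> (\<Sum>x\<in>X. \<bar>h x\<bar>)"
      using xtX X by (auto intro!: AE_I2 member_le_sum[where f="\<lambda>x. \<bar>h x\<bar>"])
  qed (rule m)
qed


theorem lemma6: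
  fixes X :: "'a::euclidean_space set" and k :: "'a \<Rightarrow> 'a \<Rightarrow> real" and f :: "'a \<Rightarrow> real"
    and B' sn \<delta> C :: real and B t fb :: nat
    and xs :: "'a list" and ys :: "real list" and xstar :: 'a
    and M :: "'w measure" and ft :: "'w \<Rightarrow> 'a \<Rightarrow> real" and xt :: "'w \<Rightarrow> 'a"
  assumes X_fin: "finite X" and X_ne: "X \<noteq> {}" and X_ball: "X \<subseteq> cball 0 1"
    and kernel: "psd_kernel X k"
    and noise: "sn > 0"
    and f_bound: "\<forall>x\<in>X. \<bar>f x\<bar> \<le> B'"
    and xstar: "xstar \<in> X" "\<forall>x\<in>X. f x \<le> f xstar"
    and delta: "0 < \<delta>" "\<delta> < 1"
    and t: "t \<ge> 1" and B: "B \<ge> 1"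
    and hist_x: "length xs = t - 1" "set xs \<subseteq> X"
    and fb: "fb \<le> t - 1" "t - fb \<le> B"
    and hist_y: "length ys = fb"
    and C: "\<forall>as. set as \<subseteq> X \<and> length as \<le> B - 1 \<longrightarrow> info_gain k sn (take fb xs) as \<le> C"
    and Ef: "\<forall>x\<in>X. \<bar>post_mean k sn (take fb xs) ys x - f x\<bar>
                  \<le> ts_beta (card X) \<delta> t * post_sd k sn (take fb xs) x"
    and M: "prob_space M"
    and ft: "gaussian_field M ft X (post_mean k sn (take fb xs) ys)
               (\<lambda>x x'. (ts_beta (card X) \<delta> t)\<^sup>2 * post_cov k sn (take fb xs) x x')"
    and xt_meas: "xt \<in> measurable M (count_space UNIV)"
    and xt_argmax: "\<forall>\<omega>\<in>space M. xt \<omega> \<in> X \<and> (\<forall>x\<in>X. ft \<omega> x \<le> ft \<omega> (xt \<omega>))"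
  shows "(LINT \<omega>|M. f xstar - f (xt \<omega>))
           \<le> ts_c (card X) \<delta> t * exp C * (1 + 10 / ts_p) * (LINT \<omega>|M. post_sd k sn xs (xt \<omega>))
             + 2 * B' / (real t)\<^sup>2"
proof -
  interpret P: prob_space M by (rule M)
  define N where "N = card X"
  define \<beta> where "\<beta> = ts_beta N \<delta> t"
  define c where "c = ts_c N \<delta> t"
  define aa where "aa = sqrt (2 * ln (real N * (real t)\<^sup>2))"
  define ys0 where "ys0 = take fb xs"
  define \<mu> where "\<mu> = post_mean k sn ys0 ys"
  define Pc where "Pc = post_cov k sn ys0"
  define \<sigma> where "\<sigma> = (\<lambda>x. post_sd k sn ys0 x)"
  define \<sigma>' where "\<sigma>' = (\<lambda>x. post_sd k sn xs x)"
  define \<Delta> where "\<Delta> = (\<lambda>x. f xstar - f x)"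
  define p where "p = ts_p"
  have cb: "c = \<beta> * (1 + aa)" unfolding c_def \<beta>_def ts_c_def aa_def by simp
  have N1: "N \<ge> 1" unfolding N_def using X_fin X_ne by (simp add: Suc_leI card_gt_0_iff)
  have B0: "B' \<ge> 0" using f_bound xstar(1) by force
  have tpos: "real t > 0" using t by simp
  have \<beta>pos: "\<beta> > 0"
  proof -
    have p9: "pi * pi > 3 * 3" using pi_gt3 by (intro mult_strict_mono) auto
    have t1: "(real t)\<^sup>2 \<ge> 1" using t by simp
    have n1: "real N \<ge> 1" using N1 by simp
    have "(real t)\<^sup>2 * real N \<ge> 1 * 1" using t1 n1 by (intro mult_mono) auto
    hence a1: "pi\<^sup>2 * (real t)\<^sup>2 * real N \<ge> pi * pi"
      using mult_left_mono[of 1 "(real t)\<^sup>2 * real N" "pi * pi"] by (simp add: power2_eq_square mult_ac)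
    have d3: "3 * \<delta> < 3" "3 * \<delta> > 0" using delta by auto
    have "pi\<^sup>2 * (real t)\<^sup>2 * real N / (3 * \<delta>) > 1"
      using a1 p9 d3 by (simp add: field_simps)
    thus ?thesis unfolding \<beta>_def ts_beta_def by simp
  qed
  have Nt1: "real N * (real t)\<^sup>2 \<ge> 1"
  proof -
    have "(real t)\<^sup>2 \<ge> 1" using t by simp
    moreover have "real N \<ge> 1" using N1 by simp
    ultimately show ?thesis using mult_mono[of 1 "real N" 1 "(real t)\<^sup>2"] by simp
  qed
  have aa0: "aa \<ge> 0" unfolding aa_def using Nt1 by simp
  have c0: "c \<ge> 0" unfolding cb using \<beta>pos aa0 by simp
  have p0: "p > 0" unfolding p_def ts_p_def by simp
  have ys0X: "set ys0 \<subseteq> X" unfolding ys0_def using hist_x(2) set_take_subset by fast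
  have Pc0: "\<forall>x\<in>X. Pc x x \<ge> 0" unfolding Pc_def
    using psd_diag[OF X_fin _ post_cov_psd[OF X_fin ys0X kernel noise]] by blast
  have \<sigma>0: "\<forall>x\<in>X. \<sigma> x \<ge> 0" unfolding \<sigma>_def post_sd_def using Pc0 unfolding Pc_def by simp
  have \<sigma>'0: "\<forall>x\<in>X. \<sigma>' x \<ge> 0" unfolding \<sigma>'_def post_sd_def
    using psd_diag[OF X_fin _ post_cov_psd[OF X_fin hist_x(2) kernel noise]] by simp
  have ratio: "\<forall>x\<in>X. \<sigma> x \<le> exp C * \<sigma>' x"
  proof
    fix x assume x: "x \<in> X"
    have dX: "set (drop fb xs) \<subseteq> X" using hist_x(2) set_drop_subset by fast
    moreover have "length (drop fb xs) \<le> B - 1" using hist_x(1) fb by simp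
    ultimately have IG: "info_gain k sn ys0 (drop fb xs) \<le> C" using C unfolding ys0_def by blast
    show "\<sigma> x \<le> exp C * \<sigma>' x"
      using sd_ratio[OF X_fin kernel noise x ys0X dX IG] unfolding \<sigma>_def \<sigma>'_def ys0_def
      by simp
  qed
  have xtX: "\<forall>\<omega>\<in>space M. xt \<omega> \<in> X" using xt_argmax by blast
  have integ: "\<And>h. integrable M (\<lambda>\<omega>. (h (xt \<omega>) :: real))"
    by (rule integrable_fin[OF M X_fin xt_meas xtX])
  define E\<sigma> where "E\<sigma> = (LINT \<omega>|M. \<sigma> (xt \<omega>))"
  define E\<sigma>' where "E\<sigma>' = (LINT \<omega>|M. \<sigma>' (xt \<omega>))"
  have E\<sigma>0: "E\<sigma> \<ge> 0" unfolding E\<sigma>_def using \<sigma>0 xtX by (intro integral_nonneg_AE AE_I2) auto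
  have EE: "E\<sigma> \<le> exp C * E\<sigma>'"
  proof -
    have "E\<sigma> \<le> (LINT \<omega>|M. exp C * \<sigma>' (xt \<omega>))" unfolding E\<sigma>_def
      using ratio xtX by (intro integral_mono integ) auto
    also have "\<dots> = exp C * E\<sigma>'" unfolding E\<sigma>'_def by simp
    finally show ?thesis .
  qed
  have \<Delta>2B: "\<forall>\<omega>\<in>space M. \<Delta> (xt \<omega>) \<le> 2 * B'"
    using xtX f_bound xstar(1) unfolding \<Delta>_def by (smt (verit))
  have K: "(LINT \<omega>|M. \<Delta> (xt \<omega>)) \<le> c * (1 + 10 / p) * E\<sigma> + 2 * B' / (real t)\<^sup>2"
  proof (cases "t \<ge> 2 \<and> N \<ge> 2")
    case False
    have LHSle: "(LINT \<omega>|M. \<Delta> (xt \<omega>)) \<le> 2 * B' / (real t)\<^sup>2"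
    proof (cases "t = 1")
      case True
      have "(LINT \<omega>|M. \<Delta> (xt \<omega>)) \<le> (LINT \<omega>|M. 2 * B')"
        using integ[of "\<lambda>_. 2 * B'"] \<Delta>2B by (intro integral_mono integ) auto
      also have "\<dots> = 2 * B'" using P.prob_space by simp
      finally show ?thesis using True by simp
    next
      case False
      hence "N = 1" using \<open>\<not> (t \<ge> 2 \<and> N \<ge> 2)\<close> t N1 by auto
      hence "X = {xstar}" using xstar(1) unfolding N_def by (metis card_1_singletonE singletonD)
      hence "\<forall>\<omega>\<in>space M. \<Delta> (xt \<omega>) = 0" using xtX unfolding \<Delta>_def by auto
      hence "(LINT \<omega>|M. \<Delta> (xt \<omega>)) = (LINT \<omega>|M. 0)" by (intro Bochner_Integration.integral_cong) auto
      thus ?thesis using B0 by simp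
    qed
    moreover have "c * (1 + 10 / p) * E\<sigma> \<ge> 0" using c0 p0 E\<sigma>0 by simp
    ultimately show ?thesis by linarith
  next
    case True
    have t2: "t \<ge> 2" and N2: "N \<ge> 2" using True by auto
    have Nt8: "real N * (real t)\<^sup>2 \<ge> 8"
    proof -
      have "(real t)\<^sup>2 \<ge> 2\<^sup>2" using t2 by (intro power_mono) auto
      moreover have "real N \<ge> 2" using N2 by simp
      ultimately show ?thesis using mult_mono[of 2 "real N" 4 "(real t)\<^sup>2"] by simp
    qed
    have t4: "(real t)\<^sup>2 \<ge> 4" using t2 power_mono[of 2 "real t" 2] by simp
    have lnNt: "ln (real N * (real t)\<^sup>2) \<ge> 3/2"
      using Nt8 num_e(5) by (subst ln_ge_iff) auto
    have aa_sq: "aa\<^sup>2 = 2 * ln (real N * (real t)\<^sup>2)" unfolding aa_def using lnNt by simp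
    have aa17: "aa \<ge> 17/10"
    proof -
      have "sqrt ((17/10)\<^sup>2) \<le> aa" unfolding aa_def using lnNt by (intro real_sqrt_le_mono) (simp add: power2_eq_square)
      thus ?thesis by simp
    qed
    have aapos: "aa > 0" using aa17 by simp
    have ephi: "exp (- aa\<^sup>2 / 2) = 1 / (real N * (real t)\<^sup>2)"
    proof -
      have "- aa\<^sup>2 / 2 = - ln (real N * (real t)\<^sup>2)" unfolding aa_sq by simp
      thus ?thesis using Nt1 by (simp add: exp_minus inverse_eq_divide)
    qed
    define T where "T = exp (- aa\<^sup>2 / 2) / (aa * sqrt (2 * pi))"
    have T_eq: "real N * T = 1 / ((real t)\<^sup>2 * aa * sqrt (2 * pi))"
      unfolding T_def ephi using N1 by (simp add: field_simps)
    have sq2pi: "sqrt (2 * pi) \<ge> 2"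
    proof -
      have "sqrt (2\<^sup>2) \<le> sqrt (2 * pi)" using pi_gt3 by (intro real_sqrt_le_mono) simp
      thus ?thesis by simp
    qed
    have sdb: "\<forall>x\<in>X. sqrt (\<beta>\<^sup>2 * Pc x x) = \<beta> * \<sigma> x"
      unfolding \<sigma>_def post_sd_def Pc_def ys0_def using \<beta>pos by (simp add: real_sqrt_mult)
    have ft': "gaussian_field M ft X \<mu> (\<lambda>x x'. \<beta>\<^sup>2 * Pc x x')"
      using ft unfolding \<mu>_def Pc_def ys0_def \<beta>_def N_def .
    have marg1: "\<forall>x\<in>X. normal_rv M (\<lambda>\<omega>. ft \<omega> x) (\<mu> x) (\<beta>\<^sup>2 * Pc x x)"
      using gf_marg(1)[OF ft' X_fin] by blast
    have marg2: "\<forall>x\<in>X. normal_rv M (\<lambda>\<omega>. - ft \<omega> x) (- \<mu> x) (\<beta>\<^sup>2 * Pc x x)"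
      using gf_marg(2)[OF ft' X_fin] by blast
    have ftm: "\<forall>x\<in>X. (\<lambda>\<omega>. ft \<omega> x) \<in> borel_measurable M"
      using marg1 unfolding normal_rv_def by blast
    have v0: "\<forall>x\<in>X. \<beta>\<^sup>2 * Pc x x \<ge> 0" using Pc0 by simp
    define Ap where "Ap x = {\<omega>\<in>space M. ft \<omega> x > \<mu> x + aa * (\<beta> * \<sigma> x)}" for x
    define Am where "Am x = {\<omega>\<in>space M. - ft \<omega> x > - \<mu> x + aa * (\<beta> * \<sigma> x)}" for x
    have ApT: "\<forall>x\<in>X. measure M (Ap x) \<le> T"
    proof
      fix x assume x: "x \<in> X"
      show "measure M (Ap x) \<le> T"
        using tail_upper[OF M bspec[OF marg1 x] bspec[OF v0 x] aapos] bspec[OF sdb x]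
        unfolding Ap_def T_def by simp
    qed
    have AmT: "\<forall>x\<in>X. measure M (Am x) \<le> T"
    proof
      fix x assume x: "x \<in> X"
      show "measure M (Am x) \<le> T"
        using tail_upper[OF M bspec[OF marg2 x] bspec[OF v0 x] aapos] bspec[OF sdb x]
        unfolding Am_def T_def by simp
    qed
    have Ap_sets: "\<forall>x\<in>X. Ap x \<in> sets M"
    proof
      fix x assume x: "x \<in> X"
      have "Ap x = (\<lambda>\<omega>. ft \<omega> x) -` {\<mu> x + aa * (\<beta> * \<sigma> x)<..} \<inter> space M" unfolding Ap_def by auto
      thus "Ap x \<in> sets M" using measurable_sets[OF bspec[OF ftm x], of "{\<mu> x + aa * (\<beta> * \<sigma> x)<..}"] by simp
    qed
    have Am_sets: "\<forall>x\<in>X. Am x \<in> sets M"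
    proof
      fix x assume x: "x \<in> X"
      have "Am x = (\<lambda>\<omega>. ft \<omega> x) -` {..<\<mu> x - aa * (\<beta> * \<sigma> x)} \<inter> space M" unfolding Am_def by auto
      thus "Am x \<in> sets M" using measurable_sets[OF bspec[OF ftm x], of "{..<\<mu> x - aa * (\<beta> * \<sigma> x)}"] by simp
    qed
    define Bad where "Bad = (\<Union>x\<in>X. Ap x \<union> Am x)"
    have Bad_sets: "Bad \<in> sets M" unfolding Bad_def using Ap_sets Am_sets X_fin by auto
    have mBad: "measure M Bad \<le> 1 / (real t)\<^sup>2"
    proof -
      have "measure M Bad \<le> (\<Sum>x\<in>X. measure M (Ap x \<union> Am x))"
        unfolding Bad_def using Ap_sets Am_sets X_fin by (intro P.finite_measure_subadditive_finite) auto
      also have "\<dots> \<le> (\<Sum>x\<in>X. 2 * T)"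
      proof (rule sum_mono)
        fix x assume x: "x \<in> X"
        have "measure M (Ap x \<union> Am x) \<le> measure M (Ap x) + measure M (Am x)"
          using Ap_sets Am_sets x by (intro measure_Un_le) auto
        thus "measure M (Ap x \<union> Am x) \<le> 2 * T" using ApT AmT x by fastforce
      qed
      also have "\<dots> = 2 * (real N * T)" unfolding N_def by simp
      also have "\<dots> = 2 / ((real t)\<^sup>2 * (aa * sqrt (2 * pi)))" unfolding T_eq by (simp add: mult_ac)
      also have "\<dots> \<le> 1 / (real t)\<^sup>2"
      proof -
        have "aa * sqrt (2 * pi) \<ge> 1 * 2" using aa17 sq2pi by (intro mult_mono) auto
        thus ?thesis using tpos by (simp add: field_simps)
      qed
      finally show ?thesis .
    qed
    define U0 where "U0 = {x\<in>X. \<Delta> x \<le> c * \<sigma> x}"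
    define S where "S = X - U0"
    have xsU0: "xstar \<in> U0" unfolding U0_def \<Delta>_def using xstar(1) c0 \<sigma>0 by simp
    obtain xb where xb: "xb \<in> U0" "\<forall>x\<in>U0. \<sigma> xb \<le> \<sigma> x"
    proof -
      have fin: "finite (\<sigma> ` U0)" "\<sigma> ` U0 \<noteq> {}" using X_fin xsU0 unfolding U0_def by auto
      obtain xb where "xb \<in> U0" "\<sigma> xb = Min (\<sigma> ` U0)" using Min_in[OF fin] by auto
      thus ?thesis using that Min_le[OF fin(1)] by auto
    qed
    have xbX: "xb \<in> X" using xb(1) unfolding U0_def by simp
    define Uev where "Uev = {\<omega>\<in>space M. xt \<omega> \<in> U0}"
    have Uev_sets: "Uev \<in> sets M"
    proof -
      have "Uev = xt -` U0 \<inter> space M" unfolding Uev_def by auto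
      thus ?thesis using measurable_sets[OF xt_meas, of U0] by simp
    qed
    define E1 where "E1 = {\<omega>\<in>space M. ft \<omega> xstar \<ge> \<mu> xstar + sqrt (\<beta>\<^sup>2 * Pc xstar xstar)}"
    have E1_sets: "E1 \<in> sets M"
    proof -
      have "E1 = (\<lambda>\<omega>. ft \<omega> xstar) -` {\<mu> xstar + sqrt (\<beta>\<^sup>2 * Pc xstar xstar)..} \<inter> space M" unfolding E1_def by auto
      thus ?thesis using measurable_sets[OF bspec[OF ftm xstar(1)], of "{\<mu> xstar + sqrt (\<beta>\<^sup>2 * Pc xstar xstar)..}"] by simp
    qed
    define L0 where "L0 = (exp (- 1 / 2) - exp (- 2)) / (2 * sqrt (2 * pi))"
    have mE1: "measure M E1 \<ge> L0" unfolding E1_def L0_def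
      by (rule tail_lower[OF M bspec[OF marg1 xstar(1)] bspec[OF v0 xstar(1)]])
    define BadS where "BadS = (\<Union>x\<in>S. Ap x)"
    have BadS_sets: "BadS \<in> sets M" unfolding BadS_def S_def using Ap_sets X_fin by auto
    have mBadS: "measure M BadS \<le> 1 / (4 * aa * sqrt (2 * pi))"
    proof -
      have finS: "finite S" unfolding S_def using X_fin by simp
      have "measure M BadS \<le> (\<Sum>x\<in>S. measure M (Ap x))"
        unfolding BadS_def using Ap_sets finS unfolding S_def by (intro P.finite_measure_subadditive_finite) auto
      also have "\<dots> \<le> (\<Sum>x\<in>S. T)" using ApT unfolding S_def by (intro sum_mono) auto
      also have "\<dots> = real (card S) * T" by simp
      also have "\<dots> \<le> real N * T"
      proof -
        have "card S \<le> N" unfolding S_def N_def using X_fin by (intro card_mono) auto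
        moreover have "T \<ge> 0" unfolding T_def using aapos by simp
        ultimately show ?thesis by (intro mult_right_mono) auto
      qed
      also have "\<dots> = 1 / ((real t)\<^sup>2 * aa * sqrt (2 * pi))" by (rule T_eq)
      also have "\<dots> \<le> 1 / (4 * aa * sqrt (2 * pi))"
        using t4 aapos sq2pi t by (intro divide_left_mono mult_right_mono mult_pos_pos) auto
      finally show ?thesis .
    qed
    have Efb: "\<forall>x\<in>X. \<bar>\<mu> x - f x\<bar> \<le> \<beta> * \<sigma> x"
      using Ef unfolding \<mu>_def \<beta>_def \<sigma>_def ys0_def N_def .
    have csplit: "\<And>x. c * \<sigma> x = \<beta> * \<sigma> x + aa * (\<beta> * \<sigma> x)" unfolding cb by (simp add: algebra_simps)
    have E1sub: "E1 - BadS \<subseteq> Uev"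
    proof
      fix \<omega> assume w: "\<omega> \<in> E1 - BadS"
      hence wM: "\<omega> \<in> space M" unfolding E1_def by simp
      have x1X: "xt \<omega> \<in> X" using xtX wM by simp
      show "\<omega> \<in> Uev"
      proof (rule ccontr)
        assume "\<omega> \<notin> Uev"
        hence x1S: "xt \<omega> \<in> S" unfolding Uev_def S_def using wM x1X by simp
        hence "\<omega> \<notin> Ap (xt \<omega>)" using w unfolding BadS_def by auto
        hence a1: "ft \<omega> (xt \<omega>) \<le> \<mu> (xt \<omega>) + aa * (\<beta> * \<sigma> (xt \<omega>))" unfolding Ap_def using wM by auto
        have a2: "\<mu> (xt \<omega>) \<le> f (xt \<omega>) + \<beta> * \<sigma> (xt \<omega>)" using Efb x1X by fastforce
        have a3: "\<Delta> (xt \<omega>) > c * \<sigma> (xt \<omega>)" using x1S unfolding S_def U0_def by auto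
        have a4: "ft \<omega> xstar \<ge> \<mu> xstar + \<beta> * \<sigma> xstar" using w bspec[OF sdb xstar(1)] unfolding E1_def by auto
        have a5: "\<mu> xstar \<ge> f xstar - \<beta> * \<sigma> xstar" using Efb xstar(1) by fastforce
        have a6: "ft \<omega> xstar \<le> ft \<omega> (xt \<omega>)" using xt_argmax wM xstar(1) by blast
        show False using a1 a2 a3 a4 a5 a6 csplit[of "xt \<omega>"] unfolding \<Delta>_def by linarith
      qed
    qed
    have mUev: "measure M Uev \<ge> p / 5"
    proof -
      have "measure M E1 \<le> measure M (E1 - BadS) + measure M BadS"
      proof -
        have "measure M E1 \<le> measure M ((E1 - BadS) \<union> BadS)"
          using E1_sets BadS_sets by (intro P.finite_measure_mono) auto
        also have "\<dots> \<le> measure M (E1 - BadS) + measure M BadS"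
          using E1_sets BadS_sets by (intro measure_Un_le) auto
        finally show ?thesis .
      qed
      moreover have "measure M (E1 - BadS) \<le> measure M Uev"
        using E1sub Uev_sets by (intro P.finite_measure_mono) auto
      ultimately have "measure M Uev \<ge> L0 - 1 / (4 * aa * sqrt (2 * pi))" using mE1 mBadS by linarith
      moreover have "L0 - 1 / (4 * aa * sqrt (2 * pi)) \<ge> p / 5" unfolding L0_def p_def by (rule num_main[OF aa17])
      ultimately show ?thesis by linarith
    qed
    have pw1: "\<forall>\<omega>\<in>space M. \<Delta> (xt \<omega>) \<le> 2 * c * \<sigma> xb + c * \<sigma> (xt \<omega>) + 2 * B' * indicator Bad \<omega>"
    proof
      fix \<omega> assume wM: "\<omega> \<in> space M"
      have x1X: "xt \<omega> \<in> X" using xtX wM by simp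
      have nn: "2 * c * \<sigma> xb + c * \<sigma> (xt \<omega>) \<ge> 0" using c0 \<sigma>0 xbX x1X by simp
      show "\<Delta> (xt \<omega>) \<le> 2 * c * \<sigma> xb + c * \<sigma> (xt \<omega>) + 2 * B' * indicator Bad \<omega>"
      proof (cases "\<omega> \<in> Bad")
        case True
        have "\<Delta> (xt \<omega>) \<le> 2 * B'" using \<Delta>2B wM by blast
        thus ?thesis using True nn by simp
      next
        case False
        hence n1: "\<omega> \<notin> Ap (xt \<omega>)" "\<omega> \<notin> Am xb" unfolding Bad_def using x1X xbX by auto
        have a1: "ft \<omega> (xt \<omega>) \<le> \<mu> (xt \<omega>) + aa * (\<beta> * \<sigma> (xt \<omega>))" using n1 wM unfolding Ap_def by auto
        have a2: "- ft \<omega> xb \<le> - \<mu> xb + aa * (\<beta> * \<sigma> xb)" using n1 wM unfolding Am_def by auto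
        have a3: "\<mu> (xt \<omega>) \<le> f (xt \<omega>) + \<beta> * \<sigma> (xt \<omega>)" using Efb x1X by fastforce
        have a4: "\<mu> xb \<ge> f xb - \<beta> * \<sigma> xb" using Efb xbX by fastforce
        have a5: "ft \<omega> xb \<le> ft \<omega> (xt \<omega>)" using xt_argmax wM xbX by blast
        have a6: "\<Delta> xb \<le> c * \<sigma> xb" using xb(1) unfolding U0_def by simp
        show ?thesis using False a1 a2 a3 a4 a5 a6 csplit[of "xt \<omega>"] csplit[of xb] unfolding \<Delta>_def by simp
      qed
    qed
    have pw2: "\<forall>\<omega>\<in>space M. \<sigma> xb * indicator Uev \<omega> \<le> \<sigma> (xt \<omega>)"
    proof
      fix \<omega> assume wM: "\<omega> \<in> space M"
      show "\<sigma> xb * indicator Uev \<omega> \<le> \<sigma> (xt \<omega>)"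
        using xb(2) wM xtX \<sigma>0 unfolding Uev_def by (auto simp: indicator_def)
    qed
    have intBad: "integrable M (indicator Bad :: 'w \<Rightarrow> real)"
      using Bad_sets by (intro integrable_real_indicator) (auto simp: P.emeasure_eq_measure)
    have intUev: "integrable M (indicator Uev :: 'w \<Rightarrow> real)"
      using Uev_sets by (intro integrable_real_indicator) (auto simp: P.emeasure_eq_measure)
    have I1: "(LINT \<omega>|M. \<Delta> (xt \<omega>)) \<le> 2 * c * \<sigma> xb + c * E\<sigma> + 2 * B' * measure M Bad"
    proof -
      have "(LINT \<omega>|M. \<Delta> (xt \<omega>)) \<le> (LINT \<omega>|M. (2 * c * \<sigma> xb + c * \<sigma> (xt \<omega>)) + 2 * B' * indicator Bad \<omega>)"
        using pw1 intBad integ[of "\<lambda>y. 2 * c * \<sigma> xb + c * \<sigma> y"] by (intro integral_mono integ) auto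
      also have "\<dots> = (LINT \<omega>|M. 2 * c * \<sigma> xb + c * \<sigma> (xt \<omega>)) + 2 * B' * measure M Bad"
        using intBad integ[of "\<lambda>y. 2 * c * \<sigma> xb + c * \<sigma> y"] Bad_sets by simp
      also have "(LINT \<omega>|M. 2 * c * \<sigma> xb + c * \<sigma> (xt \<omega>)) = 2 * c * \<sigma> xb + c * E\<sigma>"
        unfolding E\<sigma>_def using integ[of "\<lambda>y. c * \<sigma> y"] integ[of \<sigma>] P.prob_space by simp
      finally show ?thesis .
    qed
    have I2: "\<sigma> xb * measure M Uev \<le> E\<sigma>"
    proof -
      have "\<sigma> xb * measure M Uev = (LINT \<omega>|M. \<sigma> xb * indicator Uev \<omega>)" using Uev_sets by simp
      also have "\<dots> \<le> E\<sigma>" unfolding E\<sigma>_def using pw2 intUev by (intro integral_mono integ) auto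
      finally show ?thesis .
    qed
    have sxb: "\<sigma> xb \<le> 5 / p * E\<sigma>"
    proof -
      have "\<sigma> xb * (p / 5) \<le> \<sigma> xb * measure M Uev" using mUev \<sigma>0 xbX by (intro mult_left_mono) auto
      hence "\<sigma> xb * (p / 5) \<le> E\<sigma>" using I2 by linarith
      thus ?thesis using p0 by (simp add: field_simps)
    qed
    have "2 * c * \<sigma> xb \<le> 2 * c * (5 / p * E\<sigma>)" using sxb c0 by (intro mult_left_mono) auto
    moreover have "2 * B' * measure M Bad \<le> 2 * B' * (1 / (real t)\<^sup>2)" using mBad B0 by (intro mult_left_mono) auto
    moreover have "2 * c * (5 / p * E\<sigma>) + c * E\<sigma> = c * (1 + 10 / p) * E\<sigma>" by (simp add: field_simps)
    ultimately show ?thesis using I1 by simp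
  qed
  have "c * (1 + 10 / p) * E\<sigma> \<le> c * (1 + 10 / p) * (exp C * E\<sigma>')"
    using EE c0 p0 by (intro mult_left_mono) auto
  thus ?thesis using K unfolding \<Delta>_def E\<sigma>'_def \<sigma>'_def c_def N_def p_def by (simp add: mult_ac)
qed

end
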